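(* For every ensemble $\mathcal{E}=\{\eta_{i},\rho_{i}\}_{i\in\mathbb{N}_{n}}$, $p_{\sf G}(\mathcal{E})\ge \lambda/n$, where $\lambda$ is the smallest nonzero eigenvalue of $\rho_0=\sum_{i}\eta_i\rho_i$.
   Context: $\mathbb{N}_{n}=\{1,\ldots,n\}$. $\mathcal{H}$ is a finite-dimensional complex Hilbert space, $\mathbb{H}_{+}$ the positive-semidefinite operators on it, $\mathbbm{1}$ the identity. An ensemble $\mathcal{E}=\{\eta_{i},\rho_{i}\}_{i\in\mathbb{N}_{n}}$: density operators $\rho_i$ with probabilities $\eta_i>0$, $\sum_i\eta_i=1$. A measurement is $\{M_{?}\}\cup\{M_{i}\}_{i\in\mathbb{N}_{n}}\subseteq\mathbb{H}_+$ with $M_?+\sum_iM_i=\mathbbm{1}$. $\mathcal{C}_{x}(\mathcal{E})$ is the maximum of $\eta_{x}\Tr(\rho_{x}M_{x})/\Tr(\rho_{0}M_{x})$ over measurements with $\Tr(\rho_{0}M_{x})>0$. $\mathbb{M}_{i}(\mathcal{E})=\{E\in\mathbb{H}_{+}\mid\Tr[(\mathcal{C}_{i}(\mathcal{E})\rho_{0}-\eta_{i}\rho_{i})E]=0\}$; $\mathbb{M}(\mathcal{E})$ is the set of measurements with $M_i\in\mathbb{M}_i(\mathcal{E})$ for all $i$ (maximum-confidence measurements). $p_{\sf G}(\mathcal{E})=\max_{\mathcal{M}\in\mathbb{M}(\mathcal{E})}\sum_{i}\eta_{i}\Tr(\rho_{i}M_{i})$. *)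

theory Defs
  imports Complex_Main "Jordan_Normal_Form.Char_Poly"
begin

text \<open>Operators on the d-dimensional complex Hilbert space are d x d complex matrices
  (type complex mat, with carrier_mat d d).  Ensembles are indexed by 1..n.\<close>

definition trace_op :: "complex mat \<Rightarrow> complex" where
  "trace_op A = (\<Sum>j<dim_row A. A $$ (j, j))"

definition hermitian_op :: "nat \<Rightarrow> complex mat \<Rightarrow> bool" where
  "hermitian_op d A \<longleftrightarrow> A \<in> carrier_mat d d \<and>
     (\<forall>j<d. \<forall>k<d. A $$ (k, j) = cnj (A $$ (j, k)))"

definition psd_op :: "nat \<Rightarrow> complex mat \<Rightarrow> bool" where
  "psd_op d A \<longleftrightarrow> hermitian_op d A \<and>
     (\<forall>v \<in> carrier_vec d. Im (conjugate v \<bullet> (A *\<^sub>v v)) = 0 \<and> Re (conjugate v \<bullet> (A *\<^sub>v v)) \<ge> 0)"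

definition density_op :: "nat \<Rightarrow> complex mat \<Rightarrow> bool" where
  "density_op d \<rho> \<longleftrightarrow> psd_op d \<rho> \<and> trace_op \<rho> = 1"

definition ensemble :: "nat \<Rightarrow> nat \<Rightarrow> (nat \<Rightarrow> real) \<Rightarrow> (nat \<Rightarrow> complex mat) \<Rightarrow> bool" where
  "ensemble d n \<eta> \<rho> \<longleftrightarrow> (\<forall>i\<in>{1..n}. \<eta> i > 0 \<and> density_op d (\<rho> i)) \<and> (\<Sum>i=1..n. \<eta> i) = 1"

definition rho0 :: "nat \<Rightarrow> nat \<Rightarrow> (nat \<Rightarrow> real) \<Rightarrow> (nat \<Rightarrow> complex mat) \<Rightarrow> complex mat" where
  "rho0 d n \<eta> \<rho> = mat d d (\<lambda>(j, k). \<Sum>i=1..n. complex_of_real (\<eta> i) * \<rho> i $$ (j, k))"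

text \<open>A measurement {M_?} \<union> {M_i}_{i in 1..n}: Mq is the inconclusive element M_?.\<close>
definition measurement :: "nat \<Rightarrow> nat \<Rightarrow> complex mat \<Rightarrow> (nat \<Rightarrow> complex mat) \<Rightarrow> bool" where
  "measurement d n Mq M \<longleftrightarrow> psd_op d Mq \<and> (\<forall>i\<in>{1..n}. psd_op d (M i)) \<and>
     (\<forall>j<d. \<forall>k<d. Mq $$ (j, k) + (\<Sum>i=1..n. M i $$ (j, k)) = (1\<^sub>m d :: complex mat) $$ (j, k))"

text \<open>Tr(A B) as a real number (it is real for positive semidefinite A, B).\<close>
definition tr_re :: "complex mat \<Rightarrow> complex mat \<Rightarrow> real" where
  "tr_re A B = Re (trace_op (A * B))"

text \<open>C_x(E): the maximum (= supremum, it is attained) confidence for outcome x.\<close>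
definition conf :: "nat \<Rightarrow> nat \<Rightarrow> (nat \<Rightarrow> real) \<Rightarrow> (nat \<Rightarrow> complex mat) \<Rightarrow> nat \<Rightarrow> real" where
  "conf d n \<eta> \<rho> x = Sup {\<eta> x * tr_re (\<rho> x) (M x) / tr_re (rho0 d n \<eta> \<rho>) (M x) | Mq M.
      measurement d n Mq M \<and> tr_re (rho0 d n \<eta> \<rho>) (M x) > 0}"

definition MC_set :: "nat \<Rightarrow> nat \<Rightarrow> (nat \<Rightarrow> real) \<Rightarrow> (nat \<Rightarrow> complex mat) \<Rightarrow> nat \<Rightarrow> complex mat set" where
  "MC_set d n \<eta> \<rho> i = {E. psd_op d E \<and>
     trace_op ((complex_of_real (conf d n \<eta> \<rho> i) \<cdot>\<^sub>m rho0 d n \<eta> \<rho> - complex_of_real (\<eta> i) \<cdot>\<^sub>m \<rho> i) * E) = 0}"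

definition MC_measurement :: "nat \<Rightarrow> nat \<Rightarrow> (nat \<Rightarrow> real) \<Rightarrow> (nat \<Rightarrow> complex mat) \<Rightarrow> complex mat \<Rightarrow> (nat \<Rightarrow> complex mat) \<Rightarrow> bool" where
  "MC_measurement d n \<eta> \<rho> Mq M \<longleftrightarrow> measurement d n Mq M \<and> (\<forall>i\<in>{1..n}. M i \<in> MC_set d n \<eta> \<rho> i)"

text \<open>p_G(E): maximum (= supremum, it is attained) success probability over M(E).\<close>
definition pG :: "nat \<Rightarrow> nat \<Rightarrow> (nat \<Rightarrow> real) \<Rightarrow> (nat \<Rightarrow> complex mat) \<Rightarrow> real" where
  "pG d n \<eta> \<rho> = Sup {(\<Sum>i=1..n. \<eta> i * tr_re (\<rho> i) (M i)) | Mq M. MC_measurement d n \<eta> \<rho> Mq M}"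

end

theory Submission
  imports Defs "Jordan_Normal_Form.Spectral_Radius"
begin

definition ipd :: "nat \<Rightarrow> complex vec \<Rightarrow> complex vec \<Rightarrow> complex" where
  "ipd d x y = (\<Sum>i<d. cnj (x $ i) * y $ i)"

definition lc :: "nat \<Rightarrow> nat \<Rightarrow> (nat \<Rightarrow> complex) \<Rightarrow> (nat \<Rightarrow> complex vec) \<Rightarrow> complex vec" where
  "lc d k c v = vec d (\<lambda>i. \<Sum>j<k. c j * v j $ i)"

definition orthonormal :: "nat \<Rightarrow> nat \<Rightarrow> (nat \<Rightarrow> complex vec) \<Rightarrow> bool" where
  "orthonormal d k v \<longleftrightarrow> (\<forall>j<k. v j \<in> carrier_vec d) \<and>
     (\<forall>j<k. \<forall>l<k. ipd d (v j) (v l) = (if j = l then 1 else 0))"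

lemma cnj_mult_self: "cnj z * z = complex_of_real ((cmod z)\<^sup>2)"
  by (metis complex_norm_square mult.commute)

lemma mult_cnj_self: "z * cnj z = complex_of_real ((cmod z)\<^sup>2)"
  by (rule complex_norm_square[symmetric])

lemma sum_delta_mult: "l < (k::nat) \<Longrightarrow> (\<Sum>j<k. f j * (if l = j then 1 else 0)) = (f l :: 'a :: comm_ring_1)"
proof -
  assume "l < k"
  have "(\<Sum>j<k. f j * (if l = j then 1 else 0)) = (\<Sum>j\<in>{..<k}. if j = l then f j else 0)"
    by (rule sum.cong) auto
  also have "\<dots> = f l" using \<open>l < k\<close> by (subst sum.delta) auto
  finally show ?thesis .
qed

lemma sum_delta_mult': "l < (k::nat) \<Longrightarrow> (\<Sum>j<k. (if j = l then 1 else 0) * f j) = (f l :: 'a :: comm_ring_1)"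
proof -
  assume "l < k"
  have "(\<Sum>j<k. (if j = l then 1 else 0) * f j) = (\<Sum>j\<in>{..<k}. if j = l then f j else 0)"
    by (rule sum.cong) auto
  also have "\<dots> = f l" using \<open>l < k\<close> by (subst sum.delta) auto
  finally show ?thesis .
qed

lemma lc_carrier[simp]: "lc d k c v \<in> carrier_vec d"
  unfolding lc_def by simp

lemma lc_dim[simp]: "dim_vec (lc d k c v) = d"
  unfolding lc_def by simp

lemma lc_index: "i < d \<Longrightarrow> lc d k c v $ i = (\<Sum>j<k. c j * v j $ i)"
  unfolding lc_def by simp

lemma ipd_cnj: "cnj (ipd d x y) = ipd d y x"
  unfolding ipd_def by (simp add: mult.commute)

lemma ipd_lc_right: "ipd d x (lc d k c v) = (\<Sum>j<k. c j * ipd d x (v j))"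
proof -
  have "ipd d x (lc d k c v) = (\<Sum>i<d. \<Sum>j<k. cnj (x $ i) * (c j * v j $ i))"
    unfolding ipd_def by (simp add: lc_index sum_distrib_left)
  also have "\<dots> = (\<Sum>j<k. \<Sum>i<d. c j * (cnj (x $ i) * v j $ i))"
    by (subst sum.swap) (simp add: algebra_simps)
  also have "\<dots> = (\<Sum>j<k. c j * ipd d x (v j))"
    unfolding ipd_def by (simp add: sum_distrib_left)
  finally show ?thesis .
qed

lemma ipd_lc_left: "ipd d (lc d k c v) y = (\<Sum>j<k. cnj (c j) * ipd d (v j) y)"
proof -
  have "ipd d (lc d k c v) y = cnj (ipd d y (lc d k c v))" by (simp add: ipd_cnj)
  also have "\<dots> = (\<Sum>j<k. cnj (c j) * ipd d (v j) y)"
    by (simp add: ipd_lc_right ipd_cnj)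
  finally show ?thesis .
qed

lemma ipd_minus_right: "y \<in> carrier_vec d \<Longrightarrow> z \<in> carrier_vec d \<Longrightarrow>
   ipd d x (y - z) = ipd d x y - ipd d x z"
  unfolding ipd_def by (simp add: algebra_simps sum_subtractf)

lemma ipd_minus_left: "y \<in> carrier_vec d \<Longrightarrow> z \<in> carrier_vec d \<Longrightarrow>
   ipd d (y - z) x = ipd d y x - ipd d z x"
  unfolding ipd_def by (simp add: algebra_simps sum_subtractf)

lemma ipd_smult_right: "y \<in> carrier_vec d \<Longrightarrow> ipd d x (a \<cdot>\<^sub>v y) = a * ipd d x y"
  unfolding ipd_def by (simp add: algebra_simps sum_distrib_left)

lemma ipd_smult_left: "y \<in> carrier_vec d \<Longrightarrow> ipd d (a \<cdot>\<^sub>v y) x = cnj a * ipd d y x"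
  unfolding ipd_def by (simp add: algebra_simps sum_distrib_left)

lemma ipd_self: "ipd d x x = complex_of_real (\<Sum>i<d. (cmod (x $ i))\<^sup>2)"
  unfolding ipd_def by (simp add: cnj_mult_self)

lemma ipd_self_Re: "Re (ipd d x x) = (\<Sum>i<d. (cmod (x $ i))\<^sup>2)" "Im (ipd d x x) = 0"
  by (simp_all add: ipd_self)

lemma ipd_self_nonneg: "Re (ipd d x x) \<ge> 0"
  by (simp add: ipd_self_Re sum_nonneg)

lemma ipd_self_zero: assumes "x \<in> carrier_vec d" "ipd d x x = 0" shows "x = 0\<^sub>v d"
proof -
  have "complex_of_real (\<Sum>i<d. (cmod (x $ i))\<^sup>2) = 0" using assms(2) by (simp only: ipd_self)
  hence "(\<Sum>i<d. (cmod (x $ i))\<^sup>2) = 0" by (simp only: of_real_eq_0_iff)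
  hence "\<forall>i\<in>{..<d}. (cmod (x $ i))\<^sup>2 = 0" by (subst (asm) sum_nonneg_eq_0_iff) auto
  thus ?thesis using assms(1) by (intro eq_vecI) auto
qed

lemma ortho_lc: assumes "orthonormal d k v" "l < k"
  shows "ipd d (v l) (lc d k c v) = c l"
proof -
  have "ipd d (v l) (lc d k c v) = (\<Sum>j<k. c j * (if l = j then 1 else 0))"
    unfolding ipd_lc_right using assms unfolding orthonormal_def by (intro sum.cong) auto
  also have "\<dots> = c l" using assms(2) by (rule sum_delta_mult)
  finally show ?thesis .
qed

lemma parseval_lc: assumes "orthonormal d k v"
  shows "ipd d (lc d k c v) (lc d k c v) = (\<Sum>j<k. cnj (c j) * c j)"
  unfolding ipd_lc_left using ortho_lc[OF assms] by simp

lemma bessel: assumes o: "orthonormal d k v" and x: "x \<in> carrier_vec d"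
  defines "r \<equiv> x - lc d k (\<lambda>j. ipd d (v j) x) v"
  shows "\<And>j. j < k \<Longrightarrow> ipd d (v j) r = 0"
    and "ipd d r r = ipd d x x - (\<Sum>j<k. complex_of_real ((cmod (ipd d (v j) x))\<^sup>2))"
proof -
  show jr: "ipd d (v j) r = 0" if "j < k" for j
    unfolding r_def using that x by (simp add: ipd_minus_right ortho_lc[OF o])
  have "ipd d (lc d k (\<lambda>j. ipd d (v j) x) v) r = 0"
    unfolding ipd_lc_left using jr by simp
  hence "ipd d r r = ipd d x r"
    unfolding r_def using x by (simp add: ipd_minus_left)
  also have "\<dots> = ipd d x x - (\<Sum>j<k. ipd d (v j) x * ipd d x (v j))"
    unfolding r_def using x by (simp add: ipd_minus_right ipd_lc_right)
  also have "(\<Sum>j<k. ipd d (v j) x * ipd d x (v j)) = (\<Sum>j<k. complex_of_real ((cmod (ipd d (v j) x))\<^sup>2))"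
    by (intro sum.cong refl) (metis mult_cnj_self ipd_cnj)
  finally show "ipd d r r = ipd d x x - (\<Sum>j<k. complex_of_real ((cmod (ipd d (v j) x))\<^sup>2))" .
qed

lemma bessel_ineq: assumes o: "orthonormal d k v" and x: "x \<in> carrier_vec d"
  shows "(\<Sum>j<k. (cmod (ipd d (v j) x))\<^sup>2) \<le> Re (ipd d x x)"
proof -
  define r where "r = x - lc d k (\<lambda>j. ipd d (v j) x) v"
  have "Re (ipd d r r) = Re (ipd d x x) - (\<Sum>j<k. (cmod (ipd d (v j) x))\<^sup>2)"
    using bessel(2)[OF o x] unfolding r_def by simp
  with ipd_self_nonneg[of d r] show ?thesis by simp
qed

lemma ipd_unit_left: "i < d \<Longrightarrow> ipd d (unit_vec d i) x = x $ i"
proof -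
  assume i: "i < d"
  have "ipd d (unit_vec d i) x = (\<Sum>j<d. (if j = i then 1 else 0) * x $ j)"
    unfolding ipd_def using i by (intro sum.cong) (auto simp: unit_vec_def)
  also have "\<dots> = x $ i" using i by (rule sum_delta_mult')
  finally show ?thesis .
qed

lemma ipd_unit_right: "i < d \<Longrightarrow> ipd d x (unit_vec d i) = cnj (x $ i)"
  by (metis ipd_cnj ipd_unit_left)

lemma sum_sq_basis: assumes o: "orthonormal d k v"
  shows "(\<Sum>i<d. \<Sum>j<k. (cmod (v j $ i))\<^sup>2) = real k"
proof -
  have "(\<Sum>i<d. \<Sum>j<k. (cmod (v j $ i))\<^sup>2) = (\<Sum>j<k. \<Sum>i<d. (cmod (v j $ i))\<^sup>2)"
    by (rule sum.swap)
  also have "\<dots> = (\<Sum>j<k. Re (ipd d (v j) (v j)))" by (simp add: ipd_self_Re)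
  also have "\<dots> = (\<Sum>j<k. 1)" using o unfolding orthonormal_def by (intro sum.cong) auto
  finally show ?thesis by simp
qed

lemma orthonormal_le: assumes o: "orthonormal d k v" shows "k \<le> d"
proof -
  have "real k = (\<Sum>i<d. \<Sum>j<k. (cmod (v j $ i))\<^sup>2)" using sum_sq_basis[OF o] by simp
  also have "\<dots> \<le> (\<Sum>i<d. 1)"
  proof (rule sum_mono)
    fix i assume i: "i \<in> {..<d}"
    have "(\<Sum>j<k. (cmod (v j $ i))\<^sup>2) = (\<Sum>j<k. (cmod (ipd d (v j) (unit_vec d i)))\<^sup>2)"
      using i by (simp add: ipd_unit_right)
    also have "\<dots> \<le> Re (ipd d (unit_vec d i) (unit_vec d i))"
      by (rule bessel_ineq[OF o]) simp
    also have "\<dots> = 1" using i by (simp add: ipd_unit_left)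
    finally show "(\<Sum>j<k. (cmod (v j $ i))\<^sup>2) \<le> 1" .
  qed
  finally show ?thesis by simp
qed


lemma normalize_vec: assumes z: "z \<in> carrier_vec d" "z \<noteq> 0\<^sub>v d"
  defines "a \<equiv> complex_of_real (1 / sqrt (Re (ipd d z z)))"
  shows "ipd d (a \<cdot>\<^sub>v z) (a \<cdot>\<^sub>v z) = 1" "\<And>y. ipd d y (a \<cdot>\<^sub>v z) = a * ipd d y z"
    "a \<cdot>\<^sub>v z \<in> carrier_vec d"
proof -
  define q where "q = Re (ipd d z z)"
  have q0: "q \<ge> 0" unfolding q_def by (rule ipd_self_nonneg)
  have zz: "ipd d z z = complex_of_real q" unfolding q_def by (simp add: ipd_self)
  have "q \<noteq> 0" using ipd_self_zero[OF z(1)] z(2) zz by auto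
  hence qp: "q > 0" using q0 by auto
  show "\<And>y. ipd d y (a \<cdot>\<^sub>v z) = a * ipd d y z" using z by (simp add: ipd_smult_right)
  have "ipd d (a \<cdot>\<^sub>v z) (a \<cdot>\<^sub>v z) = cnj a * a * ipd d z z"
    using z by (simp add: ipd_smult_right ipd_smult_left)
  also have "\<dots> = complex_of_real (1 / sqrt q * (1 / sqrt q) * q)"
    unfolding a_def zz q_def[symmetric] by (simp only: complex_cnj_complex_of_real of_real_mult Re_complex_of_real)
  also have "1 / sqrt q * (1 / sqrt q) * q = 1"
  proof -
    have s: "sqrt q * sqrt q = q" using q0 by simp
    show ?thesis using qp s by (simp add: field_simps)
  qed
  finally show "ipd d (a \<cdot>\<^sub>v z) (a \<cdot>\<^sub>v z) = 1" by simp
  show "a \<cdot>\<^sub>v z \<in> carrier_vec d" using z by simp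
qed

lemma orthonormal_extend: assumes o: "orthonormal d k v" and x: "x \<in> carrier_vec d"
  and xx: "ipd d x x = 1" and ox: "\<forall>j<k. ipd d (v j) x = 0"
  shows "orthonormal d (Suc k) (v(k := x))"
proof -
  have ox': "\<forall>j<k. ipd d x (v j) = 0" using ox by (metis ipd_cnj complex_cnj_zero)
  show ?thesis using o x xx ox ox' unfolding orthonormal_def
    by (auto simp: less_Suc_eq)
qed

lemma extend_one: assumes o: "orthonormal d k v" and k: "k < d"
  shows "\<exists>x \<in> carrier_vec d. ipd d x x = 1 \<and> (\<forall>j<k. ipd d (v j) x = 0)"
proof -
  define r where "r i = unit_vec d i - lc d k (\<lambda>j. ipd d (v j) (unit_vec d i)) v" for i
  have "\<exists>i<d. r i \<noteq> 0\<^sub>v d"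
  proof (rule ccontr)
    assume "\<not> ?thesis"
    hence r0: "\<And>i. i < d \<Longrightarrow> r i = 0\<^sub>v d" by auto
    have one: "(\<Sum>j<k. (cmod (v j $ i))\<^sup>2) = 1" if i: "i < d" for i
    proof -
      have "ipd d (r i) (r i) = 0" using r0[OF i] by (simp add: ipd_def)
      hence "ipd d (unit_vec d i) (unit_vec d i) = (\<Sum>j<k. complex_of_real ((cmod (ipd d (v j) (unit_vec d i)))\<^sup>2))"
        using bessel(2)[OF o, of "unit_vec d i"] unfolding r_def by simp
      hence "1 = (\<Sum>j<k. complex_of_real ((cmod (v j $ i))\<^sup>2))"
        using i by (simp add: ipd_unit_left ipd_unit_right)
      hence "complex_of_real 1 = complex_of_real (\<Sum>j<k. (cmod (v j $ i))\<^sup>2)" by simp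
      thus ?thesis by (metis of_real_eq_iff)
    qed
    have "real k = (\<Sum>i<d. \<Sum>j<k. (cmod (v j $ i))\<^sup>2)" using sum_sq_basis[OF o] by simp
    also have "\<dots> = (\<Sum>i<d. 1)" using one by simp
    finally show False using k by simp
  qed
  then obtain i where i: "i < d" "r i \<noteq> 0\<^sub>v d" by auto
  have rc: "r i \<in> carrier_vec d" unfolding r_def by simp
  have orth: "ipd d (v j) (r i) = 0" if "j < k" for j
    using bessel(1)[OF o, of "unit_vec d i" j] that unfolding r_def by simp
  note nv = normalize_vec[OF rc i(2)]
  show ?thesis using nv orth by (intro bexI[OF _ nv(3)]) auto
qed

lemma orthonormal_complete: assumes o: "orthonormal d d v" and z: "z \<in> carrier_vec d"
  and oz: "\<forall>j<d. ipd d (v j) z = 0"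
  shows "z = 0\<^sub>v d"
proof (rule ccontr)
  assume z0: "z \<noteq> 0\<^sub>v d"
  note nv = normalize_vec[OF z z0]
  have "orthonormal d (Suc d) (v(d := complex_of_real (1 / sqrt (Re (ipd d z z))) \<cdot>\<^sub>v z))"
    using nv oz by (intro orthonormal_extend[OF o]) auto
  from orthonormal_le[OF this] show False by simp
qed

lemma orthonormal_expand: assumes o: "orthonormal d d v" and x: "x \<in> carrier_vec d"
  shows "x = lc d d (\<lambda>j. ipd d (v j) x) v"
proof -
  define r where "r = x - lc d d (\<lambda>j. ipd d (v j) x) v"
  have "r = 0\<^sub>v d"
    using orthonormal_complete[OF o _ ] bessel(1)[OF o x] x unfolding r_def by simp
  show ?thesis
  proof (rule eq_vecI)
    show "dim_vec x = dim_vec (lc d d (\<lambda>j. ipd d (v j) x) v)" using x by simp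
    fix i assume "i < dim_vec (lc d d (\<lambda>j. ipd d (v j) x) v)"
    hence i: "i < d" by simp
    have "r $ i = 0" using \<open>r = 0\<^sub>v d\<close> i by simp
    thus "x $ i = lc d d (\<lambda>j. ipd d (v j) x) v $ i" unfolding r_def using i x by simp
  qed
qed

lemma extend_full_aux: "d - k = m \<Longrightarrow> orthonormal d k v \<Longrightarrow> k \<le> d \<Longrightarrow>
   \<exists>w. orthonormal d d w \<and> (\<forall>j<k. w j = v j)"
proof (induction m arbitrary: k v)
  case 0
  hence "k = d" by simp
  thus ?case using 0 by auto
next
  case (Suc m)
  hence k: "k < d" by simp
  from extend_one[OF Suc.prems(2) k] obtain x where
    x: "x \<in> carrier_vec d" "ipd d x x = 1" "\<forall>j<k. ipd d (v j) x = 0" by auto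
  have o': "orthonormal d (Suc k) (v(k := x))" by (rule orthonormal_extend[OF Suc.prems(2) x])
  from Suc.IH[OF _ o'] Suc.prems k obtain w where
    "orthonormal d d w" "\<forall>j<Suc k. w j = (v(k := x)) j" by force
  thus ?case by auto
qed

lemma extend_full: "orthonormal d k v \<Longrightarrow> k \<le> d \<Longrightarrow>
   \<exists>w. orthonormal d d w \<and> (\<forall>j<k. w j = v j)"
  using extend_full_aux by blast

lemma mv_index: assumes "A \<in> carrier_mat d d" "x \<in> carrier_vec d" "i < d"
  shows "(A *\<^sub>v x) $ i = (\<Sum>l<d. A $$ (i, l) * x $ l)"
proof -
  have "(A *\<^sub>v x) $ i = row A i \<bullet> x" using assms by simp
  also have "\<dots> = (\<Sum>l\<in>{0..<d}. row A i $ l * x $ l)" using assms unfolding scalar_prod_def by simp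
  also have "\<dots> = (\<Sum>l<d. A $$ (i, l) * x $ l)" using assms
    by (simp add: atLeast0LessThan)
  finally show ?thesis .
qed


lemma mv_carrier: "A \<in> carrier_mat d d \<Longrightarrow> A *\<^sub>v x \<in> carrier_vec d"
  by (metis carrier_matD(1) carrier_vecI dim_mult_mat_vec)

lemma hermitian_carrier: "hermitian_op d A \<Longrightarrow> A \<in> carrier_mat d d"
  unfolding hermitian_op_def by blast

lemma hermitian_adj: assumes A: "hermitian_op d A" and x: "x \<in> carrier_vec d" and y: "y \<in> carrier_vec d"
  shows "ipd d (A *\<^sub>v x) y = ipd d x (A *\<^sub>v y)"
proof -
  have Ac: "A \<in> carrier_mat d d" and h: "\<And>j k. j < d \<Longrightarrow> k < d \<Longrightarrow> A $$ (k, j) = cnj (A $$ (j, k))"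
    using A unfolding hermitian_op_def by blast+
  have h': "\<And>j k. j < d \<Longrightarrow> k < d \<Longrightarrow> cnj (A $$ (j, k)) = A $$ (k, j)"
  proof -
    fix j k assume "j < d" "k < d"
    thus "cnj (A $$ (j, k)) = A $$ (k, j)" using h[of k j] by simp
  qed
  have "ipd d (A *\<^sub>v x) y = (\<Sum>i<d. \<Sum>l<d. cnj (A $$ (i, l)) * cnj (x $ l) * y $ i)"
    unfolding ipd_def using Ac x by (intro sum.cong refl) (simp add: mv_index sum_distrib_right del: index_mult_mat_vec)
  also have "\<dots> = (\<Sum>i<d. \<Sum>l<d. cnj (x $ l) * (A $$ (l, i) * y $ i))"
    by (intro sum.cong refl) (simp add: h')
  also have "\<dots> = (\<Sum>l<d. \<Sum>i<d. cnj (x $ l) * (A $$ (l, i) * y $ i))"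
    by (rule sum.swap)
  also have "\<dots> = ipd d x (A *\<^sub>v y)"
    unfolding ipd_def using Ac y by (intro sum.cong refl) (simp add: mv_index sum_distrib_left del: index_mult_mat_vec)
  finally show ?thesis .
qed

lemma hermitian_real: assumes A: "hermitian_op d A" and x: "x \<in> carrier_vec d"
  shows "Im (ipd d x (A *\<^sub>v x)) = 0"
proof -
  have "cnj (ipd d x (A *\<^sub>v x)) = ipd d x (A *\<^sub>v x)"
    using hermitian_adj[OF A x x] by (simp add: ipd_cnj)
  thus ?thesis by (metis Reals_cnj_iff complex_is_Real_iff)
qed

lemma mat_lc: assumes A: "A \<in> carrier_mat d d" and u: "\<And>b. b < m \<Longrightarrow> u b \<in> carrier_vec d"
  shows "A *\<^sub>v lc d m c u = lc d m c (\<lambda>b. A *\<^sub>v u b)"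
proof (rule eq_vecI)
  show "dim_vec (A *\<^sub>v lc d m c u) = dim_vec (lc d m c (\<lambda>b. A *\<^sub>v u b))" using A by simp
  fix i assume "i < dim_vec (lc d m c (\<lambda>b. A *\<^sub>v u b))"
  hence i: "i < d" by simp
  have "(A *\<^sub>v lc d m c u) $ i = (\<Sum>l<d. \<Sum>b<m. A $$ (i, l) * (c b * u b $ l))"
    using A i by (simp add: mv_index lc_index sum_distrib_left del: index_mult_mat_vec)
  also have "\<dots> = (\<Sum>b<m. c b * (\<Sum>l<d. A $$ (i, l) * u b $ l))"
    by (subst sum.swap) (simp add: sum_distrib_left algebra_simps)
  also have "\<dots> = lc d m c (\<lambda>b. A *\<^sub>v u b) $ i"
    using A i u by (simp add: mv_index lc_index del: index_mult_mat_vec)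
  finally show "(A *\<^sub>v lc d m c u) $ i = lc d m c (\<lambda>b. A *\<^sub>v u b) $ i" .
qed

lemma orthonormal_shift: assumes "orthonormal d d w" "k \<le> d"
  shows "orthonormal d (d - k) (\<lambda>b. w (k + b))"
  using assms unfolding orthonormal_def by auto

lemma spectral_step: assumes A: "hermitian_op d A" and o: "orthonormal d k v" and k: "k < d"
  and ev: "\<forall>j<k. A *\<^sub>v v j = complex_of_real (\<mu> j) \<cdot>\<^sub>v v j"
  shows "\<exists>x \<in> carrier_vec d. \<exists>m::real. ipd d x x = 1 \<and> (\<forall>j<k. ipd d (v j) x = 0) \<and>
      A *\<^sub>v x = complex_of_real m \<cdot>\<^sub>v x"
proof -
  have Ac: "A \<in> carrier_mat d d" using A by (rule hermitian_carrier)
  obtain w where w: "orthonormal d d w" "\<forall>j<k. w j = v j"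
    using extend_full[OF o] k by auto
  have wc: "\<And>j. j < d \<Longrightarrow> w j \<in> carrier_vec d" using w(1) unfolding orthonormal_def by auto
  have ww: "\<And>j l. j < d \<Longrightarrow> l < d \<Longrightarrow> ipd d (w j) (w l) = (if j = l then 1 else 0)"
    using w(1) unfolding orthonormal_def by auto
  define m where "m = d - k"
  have m0: "m > 0" unfolding m_def using k by simp
  define C where "C = mat m m (\<lambda>(a, b). ipd d (w (k + a)) (A *\<^sub>v w (k + b)))"
  have Cc: "C \<in> carrier_mat m m" unfolding C_def by simp
  from spectrum_non_empty[OF Cc m0] obtain \<kappa> where "eigenvalue C \<kappa>"
    unfolding spectrum_def by auto
  then obtain y where y: "y \<in> carrier_vec m" "y \<noteq> 0\<^sub>v m" "C *\<^sub>v y = \<kappa> \<cdot>\<^sub>v y"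
    unfolding eigenvalue_def eigenvector_def using Cc by auto
  define x where "x = lc d m (\<lambda>b. y $ b) (\<lambda>b. w (k + b))"
  have ox: "orthonormal d m (\<lambda>b. w (k + b))" unfolding m_def using orthonormal_shift[OF w(1)] k by simp
  have xc: "x \<in> carrier_vec d" unfolding x_def by simp
  have xw1: "ipd d (w j) x = 0" if "j < k" for j
    unfolding x_def ipd_lc_right using that k by (intro sum.neutral) (auto simp: ww m_def)
  have xw2: "ipd d (w (k + a)) x = y $ a" if "a < m" for a
    unfolding x_def using ortho_lc[OF ox that] .
  have Ax: "A *\<^sub>v x = lc d m (\<lambda>b. y $ b) (\<lambda>b. A *\<^sub>v w (k + b))"
    unfolding x_def using Ac wc m_def by (intro mat_lc) auto
  have eq: "ipd d (w j) (A *\<^sub>v x - \<kappa> \<cdot>\<^sub>v x) = 0" if j: "j < d" for j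
  proof -
    have "ipd d (w j) (A *\<^sub>v x - \<kappa> \<cdot>\<^sub>v x) = ipd d (w j) (A *\<^sub>v x) - \<kappa> * ipd d (w j) x"
      using Ac xc by (simp add: ipd_minus_right ipd_smult_right)
    also have "\<dots> = 0"
    proof (cases "j < k")
      case True
      have "ipd d (w j) (A *\<^sub>v x) = ipd d (A *\<^sub>v w j) x"
        using hermitian_adj[OF A wc[OF j] xc] by simp
      also have "\<dots> = 0" using True ev w(2) xw1[OF True] wc[OF j] by (simp add: ipd_smult_left)
      finally show ?thesis using xw1[OF True] by simp
    next
      case False
      define a where "a = j - k"
      have a: "a < m" "j = k + a" unfolding a_def m_def using False j by auto
      have "ipd d (w j) (A *\<^sub>v x) = (\<Sum>b<m. y $ b * C $$ (a, b))"
        unfolding Ax ipd_lc_right using a by (intro sum.cong) (auto simp: C_def)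
      also have "\<dots> = (C *\<^sub>v y) $ a" using Cc y(1) a(1) by (simp add: mv_index mult.commute del: index_mult_mat_vec)
      also have "\<dots> = \<kappa> * y $ a" using y a by simp
      finally show ?thesis using xw2[OF a(1)] a by simp
    qed
    finally show ?thesis .
  qed
  have Axk: "A *\<^sub>v x = \<kappa> \<cdot>\<^sub>v x"
  proof -
    have z: "A *\<^sub>v x - \<kappa> \<cdot>\<^sub>v x = 0\<^sub>v d"
      using orthonormal_complete[OF w(1) _ ] eq Ac xc by simp
    show ?thesis
    proof (rule eq_vecI)
      show "dim_vec (A *\<^sub>v x) = dim_vec (\<kappa> \<cdot>\<^sub>v x)" using Ac xc by simp
      fix i assume "i < dim_vec (\<kappa> \<cdot>\<^sub>v x)"
      hence i: "i < d" using xc by simp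
      have "(A *\<^sub>v x - \<kappa> \<cdot>\<^sub>v x) $ i = 0" using z i by simp
      thus "(A *\<^sub>v x) $ i = (\<kappa> \<cdot>\<^sub>v x) $ i" using i xc Ac by simp
    qed
  qed
  have x0: "x \<noteq> 0\<^sub>v d"
  proof
    assume "x = 0\<^sub>v d"
    hence "\<And>a. a < m \<Longrightarrow> y $ a = 0" using xw2 by (simp add: ipd_def)
    hence "y = 0\<^sub>v m" using y(1) by (intro eq_vecI) auto
    thus False using y(2) by simp
  qed
  have xxpos: "Re (ipd d x x) > 0"
  proof -
    have "ipd d x x \<noteq> 0" using ipd_self_zero[OF xc] x0 by auto
    hence "Re (ipd d x x) \<noteq> 0" using ipd_self_Re(2)[of d x] by (simp add: complex_eq_iff)
    thus ?thesis using ipd_self_nonneg[of d x] by simp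
  qed
  have "ipd d x (A *\<^sub>v x) = \<kappa> * ipd d x x" using Axk xc by (simp add: ipd_smult_right)
  hence "Im (\<kappa> * ipd d x x) = 0" using hermitian_real[OF A xc] by simp
  hence "Im \<kappa> * Re (ipd d x x) = 0" by (simp add: ipd_self_Re(2))
  hence imk: "Im \<kappa> = 0" using xxpos by simp
  note nv = normalize_vec[OF xc x0]
  define \<alpha> where "\<alpha> = complex_of_real (1 / sqrt (Re (ipd d x x)))"
  have "A *\<^sub>v (\<alpha> \<cdot>\<^sub>v x) = complex_of_real (Re \<kappa>) \<cdot>\<^sub>v (\<alpha> \<cdot>\<^sub>v x)"
  proof -
    have k': "complex_of_real (Re \<kappa>) = \<kappa>" using imk by (simp add: complex_eq_iff)
    have "A *\<^sub>v (\<alpha> \<cdot>\<^sub>v x) = \<alpha> \<cdot>\<^sub>v (A *\<^sub>v x)" using Ac xc by (rule mult_mat_vec)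
    also have "\<dots> = \<alpha> \<cdot>\<^sub>v (\<kappa> \<cdot>\<^sub>v x)" by (simp only: Axk)
    also have "\<dots> = \<kappa> \<cdot>\<^sub>v (\<alpha> \<cdot>\<^sub>v x)" by (simp add: smult_smult_assoc mult.commute)
    finally show ?thesis unfolding k' .
  qed
  thus ?thesis using nv xw1 w(2) unfolding \<alpha>_def
    by (intro bexI[OF _ nv(3)] exI[of _ "Re \<kappa>"]) auto
qed

lemma spectral_aux: assumes A: "hermitian_op d A"
  shows "k \<le> d \<Longrightarrow> \<exists>v \<mu>. orthonormal d k v \<and> (\<forall>j<k. A *\<^sub>v v j = complex_of_real (\<mu> j) \<cdot>\<^sub>v v j)"
proof (induction k)
  case 0
  show ?case unfolding orthonormal_def by auto
next
  case (Suc k)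
  then obtain v \<mu> where v: "orthonormal d k v" "\<forall>j<k. A *\<^sub>v v j = complex_of_real (\<mu> j) \<cdot>\<^sub>v v j"
    by auto
  from spectral_step[OF A v(1) _ v(2)] Suc.prems obtain x m where
    x: "x \<in> carrier_vec d" "ipd d x x = 1" "\<forall>j<k. ipd d (v j) x = 0" "A *\<^sub>v x = complex_of_real m \<cdot>\<^sub>v x"
    by auto
  have "orthonormal d (Suc k) (v(k := x))" by (rule orthonormal_extend[OF v(1) x(1-3)])
  moreover have "\<forall>j<Suc k. A *\<^sub>v (v(k := x)) j = complex_of_real ((\<mu>(k := m)) j) \<cdot>\<^sub>v (v(k := x)) j"
    using v(2) x(4) by (auto simp: less_Suc_eq)
  ultimately show ?case by blast
qed

theorem spectral: assumes "hermitian_op d A"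
  shows "\<exists>v \<mu>. orthonormal d d v \<and> (\<forall>j<d. A *\<^sub>v v j = complex_of_real (\<mu> j) \<cdot>\<^sub>v v j)"
  using spectral_aux[OF assms] by simp

lemma qf: assumes A: "A \<in> carrier_mat d d" and v: "v \<in> carrier_vec d"
  shows "ipd d v (A *\<^sub>v v) = (\<Sum>a<d. \<Sum>b<d. cnj (v $ a) * A $$ (a, b) * v $ b)"
  unfolding ipd_def
  by (intro sum.cong refl) (simp add: mv_index[OF A v] sum_distrib_left mult.assoc del: index_mult_mat_vec)

lemma trace_prod: assumes A: "A \<in> carrier_mat d d" and B: "B \<in> carrier_mat d d"
  shows "trace_op (A * B) = (\<Sum>a<d. \<Sum>b<d. A $$ (a, b) * B $$ (b, a))"
  unfolding trace_op_def using A B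
  by (auto simp: scalar_prod_def atLeast0LessThan intro!: sum.cong)

definition r1 :: "nat \<Rightarrow> complex \<Rightarrow> complex vec \<Rightarrow> complex mat" where
  "r1 d t u = mat d d (\<lambda>(a, b). t * (u $ a * cnj (u $ b)))"

lemma r1_carrier[simp]: "r1 d t u \<in> carrier_mat d d"
  unfolding r1_def by simp

lemma r1_index: "a < d \<Longrightarrow> b < d \<Longrightarrow> r1 d t u $$ (a, b) = t * (u $ a * cnj (u $ b))"
  unfolding r1_def by simp

lemma trace_r1: assumes A: "A \<in> carrier_mat d d" and u: "u \<in> carrier_vec d"
  shows "trace_op (A * r1 d t u) = t * ipd d u (A *\<^sub>v u)"
proof -
  have "trace_op (A * r1 d t u) = (\<Sum>a<d. \<Sum>b<d. A $$ (a, b) * (t * (u $ b * cnj (u $ a))))"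
    unfolding trace_prod[OF A r1_carrier] by (intro sum.cong refl) (simp add: r1_index)
  also have "\<dots> = t * (\<Sum>a<d. \<Sum>b<d. cnj (u $ a) * A $$ (a, b) * u $ b)"
    by (simp add: sum_distrib_left algebra_simps)
  also have "\<dots> = t * ipd d u (A *\<^sub>v u)"
  proof -
    show ?thesis using qf[OF A u] by simp
  qed
  finally show ?thesis .
qed

lemma qf_r1: assumes v: "v \<in> carrier_vec d"
  shows "ipd d v (r1 d t u *\<^sub>v v) = t * complex_of_real ((cmod (ipd d u v))\<^sup>2)"
proof -
  have "ipd d v (r1 d t u *\<^sub>v v) = (\<Sum>a<d. \<Sum>b<d. cnj (v $ a) * (t * (u $ a * cnj (u $ b))) * v $ b)"
    unfolding qf[OF r1_carrier v] by (intro sum.cong refl) (simp add: r1_index)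
  also have "\<dots> = t * (\<Sum>a<d. \<Sum>b<d. (cnj (v $ a) * u $ a) * (cnj (u $ b) * v $ b))"
    by (simp add: sum_distrib_left algebra_simps)
  also have "\<dots> = t * ((\<Sum>a<d. cnj (v $ a) * u $ a) * (\<Sum>b<d. cnj (u $ b) * v $ b))"
    by (simp only: sum_product)
  also have "\<dots> = t * (ipd d v u * ipd d u v)" unfolding ipd_def ..
  also have "ipd d v u * ipd d u v = complex_of_real ((cmod (ipd d u v))\<^sup>2)"
    by (metis cnj_mult_self ipd_cnj)
  finally show ?thesis .
qed

lemma cauchy_schwarz: assumes u: "u \<in> carrier_vec d" and v: "v \<in> carrier_vec d"
  shows "(cmod (ipd d u v))\<^sup>2 \<le> Re (ipd d u u) * Re (ipd d v v)"
proof (cases "u = 0\<^sub>v d")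
  case True
  thus ?thesis by (simp add: ipd_def mult_nonneg_nonneg ipd_self_nonneg)
next
  case False
  define q where "q = Re (ipd d u u)"
  have uu: "ipd d u u = complex_of_real q" unfolding q_def by (simp add: ipd_self)
  have "ipd d u u \<noteq> 0" using ipd_self_zero[OF u] False by auto
  hence "q \<noteq> 0" using uu by auto
  hence qp: "q > 0" using ipd_self_nonneg[of d u] unfolding q_def by auto
  note nv = normalize_vec[OF u False]
  define a where "a = complex_of_real (1 / sqrt q)"
  have o: "orthonormal d 1 (\<lambda>_. a \<cdot>\<^sub>v u)" unfolding orthonormal_def using nv unfolding a_def q_def by auto
  from bessel_ineq[OF o v] have "(cmod (ipd d (a \<cdot>\<^sub>v u) v))\<^sup>2 \<le> Re (ipd d v v)" by simp
  moreover have "ipd d (a \<cdot>\<^sub>v u) v = a * ipd d u v" using u unfolding a_def by (simp add: ipd_smult_left)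
  moreover have "cmod (a * ipd d u v) = (1 / sqrt q) * cmod (ipd d u v)"
    unfolding a_def using qp by (simp only: norm_mult norm_of_real) simp
  moreover have "((1 / sqrt q) * cmod (ipd d u v))\<^sup>2 = (cmod (ipd d u v))\<^sup>2 / q"
    using qp by (simp add: power_mult_distrib power_divide)
  ultimately have "(cmod (ipd d u v))\<^sup>2 / q \<le> Re (ipd d v v)" by simp
  thus ?thesis using qp unfolding q_def[symmetric] by (simp add: divide_le_eq mult.commute)
qed

lemma psd_hermitian: "psd_op d A \<Longrightarrow> hermitian_op d A"
  unfolding psd_op_def by blast

lemma psd_carrier: "psd_op d A \<Longrightarrow> A \<in> carrier_mat d d"
  unfolding psd_op_def hermitian_op_def by blast

lemma ipd_scalar: "v \<in> carrier_vec d \<Longrightarrow> w \<in> carrier_vec d \<Longrightarrow> conjugate v \<bullet> w = ipd d v w"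
  unfolding ipd_def scalar_prod_def by (auto simp: atLeast0LessThan intro!: sum.cong)

lemma psd_qf: assumes "psd_op d A" "v \<in> carrier_vec d"
  shows "Im (ipd d v (A *\<^sub>v v)) = 0 \<and> Re (ipd d v (A *\<^sub>v v)) \<ge> 0"
proof -
  have "A \<in> carrier_mat d d" using assms(1) by (rule psd_carrier)
  hence "conjugate v \<bullet> (A *\<^sub>v v) = ipd d v (A *\<^sub>v v)" using assms(2) by (intro ipd_scalar mv_carrier)
  with assms show ?thesis unfolding psd_op_def by metis
qed

lemma psd_qfI: assumes "hermitian_op d A"
  "\<And>v. v \<in> carrier_vec d \<Longrightarrow> Im (ipd d v (A *\<^sub>v v)) = 0 \<and> Re (ipd d v (A *\<^sub>v v)) \<ge> 0"
  shows "psd_op d A"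
proof -
  have "A \<in> carrier_mat d d" using assms(1) by (rule hermitian_carrier)
  hence "\<And>v. v \<in> carrier_vec d \<Longrightarrow> conjugate v \<bullet> (A *\<^sub>v v) = ipd d v (A *\<^sub>v v)" by (intro ipd_scalar mv_carrier)
  with assms show ?thesis unfolding psd_op_def by metis
qed


lemma lc_smult: assumes "\<And>p. p < k \<Longrightarrow> w p \<in> carrier_vec d"
  shows "lc d k c (\<lambda>p. a p \<cdot>\<^sub>v w p) = lc d k (\<lambda>p. c p * a p) w"
proof (rule eq_vecI)
  fix i assume "i < dim_vec (lc d k (\<lambda>p. c p * a p) w)"
  hence i: "i < d" by simp
  have dw: "\<And>p. p < k \<Longrightarrow> dim_vec (w p) = d" using assms by auto
  show "lc d k c (\<lambda>p. a p \<cdot>\<^sub>v w p) $ i = lc d k (\<lambda>p. c p * a p) w $ i"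
    unfolding lc_index[OF i] using i dw by (intro sum.cong refl) (simp add: mult.assoc)
qed simp

lemma eig_apply: assumes A: "A \<in> carrier_mat d d" and o: "orthonormal d d w"
  and ev: "\<forall>p<d. A *\<^sub>v w p = complex_of_real (\<beta> p) \<cdot>\<^sub>v w p" and x: "x \<in> carrier_vec d"
  shows "A *\<^sub>v x = lc d d (\<lambda>p. ipd d (w p) x * complex_of_real (\<beta> p)) w"
proof -
  have wc: "\<And>p. p < d \<Longrightarrow> w p \<in> carrier_vec d" using o unfolding orthonormal_def by auto
  have "A *\<^sub>v x = A *\<^sub>v lc d d (\<lambda>p. ipd d (w p) x) w" using orthonormal_expand[OF o x] by simp
  also have "\<dots> = lc d d (\<lambda>p. ipd d (w p) x) (\<lambda>p. A *\<^sub>v w p)" by (rule mat_lc[OF A wc])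
  also have "\<dots> = lc d d (\<lambda>p. ipd d (w p) x) (\<lambda>p. complex_of_real (\<beta> p) \<cdot>\<^sub>v w p)"
    unfolding lc_def using ev by (intro eq_vecI) (auto intro!: sum.cong)
  also have "\<dots> = lc d d (\<lambda>p. ipd d (w p) x * complex_of_real (\<beta> p)) w"
    by (rule lc_smult[OF wc])
  finally show ?thesis .
qed

lemma eig_qf: assumes A: "A \<in> carrier_mat d d" and o: "orthonormal d d w"
  and ev: "\<forall>p<d. A *\<^sub>v w p = complex_of_real (\<beta> p) \<cdot>\<^sub>v w p" and x: "x \<in> carrier_vec d"
  shows "ipd d x (A *\<^sub>v x) = (\<Sum>p<d. complex_of_real (\<beta> p * (cmod (ipd d (w p) x))\<^sup>2))"
proof -
  have "ipd d x (A *\<^sub>v x) = (\<Sum>p<d. ipd d (w p) x * complex_of_real (\<beta> p) * ipd d x (w p))"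
    unfolding eig_apply[OF A o ev x] ipd_lc_right ..
  also have "\<dots> = (\<Sum>p<d. complex_of_real (\<beta> p * (cmod (ipd d (w p) x))\<^sup>2))"
  proof (intro sum.cong refl)
    fix p
    have "ipd d (w p) x * ipd d x (w p) = complex_of_real ((cmod (ipd d (w p) x))\<^sup>2)"
      by (metis mult_cnj_self ipd_cnj)
    thus "ipd d (w p) x * complex_of_real (\<beta> p) * ipd d x (w p) = complex_of_real (\<beta> p * (cmod (ipd d (w p) x))\<^sup>2)"
      by (simp add: algebra_simps)
  qed
  finally show ?thesis .
qed

lemma parseval: assumes o: "orthonormal d d w" and x: "x \<in> carrier_vec d"
  shows "ipd d x x = (\<Sum>p<d. complex_of_real ((cmod (ipd d (w p) x))\<^sup>2))"
proof -
  have "ipd d x x = ipd d (lc d d (\<lambda>p. ipd d (w p) x) w) (lc d d (\<lambda>p. ipd d (w p) x) w)"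
    using orthonormal_expand[OF o x] by simp
  also have "\<dots> = (\<Sum>p<d. cnj (ipd d (w p) x) * ipd d (w p) x)" by (rule parseval_lc[OF o])
  also have "\<dots> = (\<Sum>p<d. complex_of_real ((cmod (ipd d (w p) x))\<^sup>2))" by (simp add: cnj_mult_self)
  finally show ?thesis .
qed

lemma eig_nonneg: assumes "psd_op d A" "orthonormal d d w"
  "\<forall>p<d. A *\<^sub>v w p = complex_of_real (\<beta> p) \<cdot>\<^sub>v w p" "p < d"
  shows "\<beta> p \<ge> 0"
proof -
  have wc: "w p \<in> carrier_vec d" and ww: "ipd d (w p) (w p) = 1"
    using assms(2,4) unfolding orthonormal_def by auto
  have "ipd d (w p) (A *\<^sub>v w p) = complex_of_real (\<beta> p)"
    using assms(3,4) wc ww by (simp add: ipd_smult_right)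
  with psd_qf[OF assms(1) wc] show ?thesis by simp
qed

lemma mat_unit_index: assumes "(M :: complex mat) \<in> carrier_mat d d" "a < d" "b < d"
  shows "(M *\<^sub>v unit_vec d a) $ b = M $$ (b, a)"
proof -
  have "(M *\<^sub>v unit_vec d a) $ b = (\<Sum>l<d. M $$ (b, l) * unit_vec d a $ l)"
    using assms by (intro mv_index) auto
  also have "\<dots> = (\<Sum>l<d. M $$ (b, l) * (if a = l then 1 else 0))"
    by (intro sum.cong refl) (auto simp: unit_vec_def)
  also have "\<dots> = M $$ (b, a)" using assms(2) by (rule sum_delta_mult)
  finally show ?thesis .
qed

lemma psd_trace_decomp: assumes M: "psd_op d M"
  shows "\<exists>w \<beta>. (\<forall>p<d. \<beta> p \<ge> 0 \<and> w p \<in> carrier_vec d) \<and>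
    (\<forall>A \<in> carrier_mat d d. trace_op (A * M) = (\<Sum>p<d. complex_of_real (\<beta> p) * ipd d (w p) (A *\<^sub>v w p)))"
proof -
  have Mc: "M \<in> carrier_mat d d" using M by (rule psd_carrier)
  obtain w \<beta> where o: "orthonormal d d w" and ev: "\<forall>p<d. M *\<^sub>v w p = complex_of_real (\<beta> p) \<cdot>\<^sub>v w p"
    using spectral[OF psd_hermitian[OF M]] by auto
  have wc: "\<And>p. p < d \<Longrightarrow> w p \<in> carrier_vec d" using o unfolding orthonormal_def by auto
  have ent: "M $$ (b, a) = (\<Sum>p<d. cnj (w p $ a) * complex_of_real (\<beta> p) * w p $ b)" if ab: "a < d" "b < d" for a b
  proof -
    have "M $$ (b, a) = (M *\<^sub>v unit_vec d a) $ b" using mat_unit_index[OF Mc ab] by simp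
    also have "\<dots> = lc d d (\<lambda>p. ipd d (w p) (unit_vec d a) * complex_of_real (\<beta> p)) w $ b"
      by (subst eig_apply[OF Mc o ev]) (use ab in auto)
    also have "\<dots> = (\<Sum>p<d. cnj (w p $ a) * complex_of_real (\<beta> p) * w p $ b)"
      using ab by (simp add: lc_index ipd_unit_right)
    finally show ?thesis .
  qed
  have "trace_op (A * M) = (\<Sum>p<d. complex_of_real (\<beta> p) * ipd d (w p) (A *\<^sub>v w p))"
    if A: "A \<in> carrier_mat d d" for A
  proof -
    have "trace_op (A * M) = (\<Sum>a<d. \<Sum>b<d. A $$ (a, b) * (\<Sum>p<d. cnj (w p $ a) * complex_of_real (\<beta> p) * w p $ b))"
      unfolding trace_prod[OF A Mc] by (intro sum.cong refl) (simp add: ent)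
    also have "\<dots> = (\<Sum>a<d. \<Sum>b<d. \<Sum>p<d. complex_of_real (\<beta> p) * (cnj (w p $ a) * A $$ (a, b) * w p $ b))"
      by (intro sum.cong refl) (simp add: sum_distrib_left algebra_simps)
    also have "\<dots> = (\<Sum>a<d. \<Sum>p<d. \<Sum>b<d. complex_of_real (\<beta> p) * (cnj (w p $ a) * A $$ (a, b) * w p $ b))"
      by (rule sum.cong[OF refl]) (rule sum.swap)
    also have "\<dots> = (\<Sum>p<d. \<Sum>a<d. \<Sum>b<d. complex_of_real (\<beta> p) * (cnj (w p $ a) * A $$ (a, b) * w p $ b))"
      by (rule sum.swap)
    also have "\<dots> = (\<Sum>p<d. complex_of_real (\<beta> p) * ipd d (w p) (A *\<^sub>v w p))"
      by (intro sum.cong refl) (simp add: qf[OF A wc] sum_distrib_left)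
    finally show ?thesis .
  qed
  moreover have "\<forall>p<d. \<beta> p \<ge> 0 \<and> w p \<in> carrier_vec d"
    using eig_nonneg[OF M o ev] wc by auto
  ultimately show ?thesis by blast
qed

lemma psd_trace_nonneg: assumes "psd_op d A" "psd_op d M"
  shows "Re (trace_op (A * M)) \<ge> 0"
proof -
  obtain w \<beta> where wb: "\<forall>p<d. \<beta> p \<ge> 0 \<and> w p \<in> carrier_vec d"
    and tr: "\<forall>A \<in> carrier_mat d d. trace_op (A * M) = (\<Sum>p<d. complex_of_real (\<beta> p) * ipd d (w p) (A *\<^sub>v w p))"
    using psd_trace_decomp[OF assms(2)] by blast
  have "Re (trace_op (A * M)) = (\<Sum>p<d. \<beta> p * Re (ipd d (w p) (A *\<^sub>v w p)))"
    using tr psd_carrier[OF assms(1)] by simp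
  also have "\<dots> \<ge> 0" using wb psd_qf[OF assms(1)] by (intro sum_nonneg mult_nonneg_nonneg) auto
  finally show ?thesis .
qed

lemma psd_kernel: assumes A: "psd_op d A" and x: "x \<in> carrier_vec d" and z: "ipd d x (A *\<^sub>v x) = 0"
  shows "A *\<^sub>v x = 0\<^sub>v d"
proof -
  have Ac: "A \<in> carrier_mat d d" using A by (rule psd_carrier)
  obtain w \<beta> where o: "orthonormal d d w" and ev: "\<forall>p<d. A *\<^sub>v w p = complex_of_real (\<beta> p) \<cdot>\<^sub>v w p"
    using spectral[OF psd_hermitian[OF A]] by auto
  have nn: "\<And>p. p < d \<Longrightarrow> \<beta> p \<ge> 0" using eig_nonneg[OF A o ev] .
  have "complex_of_real (\<Sum>p<d. \<beta> p * (cmod (ipd d (w p) x))\<^sup>2) = 0"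
    using eig_qf[OF Ac o ev x] z by simp
  hence "(\<Sum>p<d. \<beta> p * (cmod (ipd d (w p) x))\<^sup>2) = 0" by (simp only: of_real_eq_0_iff)
  hence "\<forall>p\<in>{..<d}. \<beta> p * (cmod (ipd d (w p) x))\<^sup>2 = 0"
    using nn by (subst (asm) sum_nonneg_eq_0_iff) auto
  hence z0: "\<And>p. p < d \<Longrightarrow> ipd d (w p) x * complex_of_real (\<beta> p) = 0" by auto
  show ?thesis unfolding eig_apply[OF Ac o ev x] using z0
    by (intro eq_vecI) (auto simp: lc_index intro!: sum.neutral)
qed

lemma psd_r1: assumes "t \<ge> 0" shows "psd_op d (r1 d (complex_of_real t) u)"
proof (rule psd_qfI)
  show "hermitian_op d (r1 d (complex_of_real t) u)"
    unfolding hermitian_op_def by (auto simp: r1_index)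
  fix v :: "complex vec" assume v: "v \<in> carrier_vec d"
  show "Im (ipd d v (r1 d (complex_of_real t) u *\<^sub>v v)) = 0 \<and> 0 \<le> Re (ipd d v (r1 d (complex_of_real t) u *\<^sub>v v))"
    unfolding qf_r1[OF v] using assms by simp
qed

definition Mq_of :: "nat \<Rightarrow> nat \<Rightarrow> (nat \<Rightarrow> complex mat) \<Rightarrow> complex mat" where
  "Mq_of d n M = mat d d (\<lambda>(a, b). (1\<^sub>m d :: complex mat) $$ (a, b) - (\<Sum>j=1..n. M j $$ (a, b)))"

lemma meas_construct:
  assumes u: "\<forall>j\<in>{1..n}. u j \<in> carrier_vec d" and t: "\<forall>j\<in>{1..n}. t j \<ge> 0"
    and s: "(\<Sum>j=1..n. t j * Re (ipd d (u j) (u j))) \<le> 1"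
  defines "M \<equiv> (\<lambda>j. r1 d (complex_of_real (t j)) (u j))"
  shows "measurement d n (Mq_of d n M) M"
proof -
  have psdM: "\<forall>j\<in>{1..n}. psd_op d (M j)" unfolding M_def using t psd_r1 by auto
  have Mqc: "Mq_of d n M \<in> carrier_mat d d" unfolding Mq_of_def by simp
  have herm: "hermitian_op d (Mq_of d n M)"
    unfolding hermitian_op_def Mq_of_def M_def by (auto simp: r1_index mult.commute intro!: sum.cong)
  have qfq: "ipd d v (Mq_of d n M *\<^sub>v v) = ipd d v v - (\<Sum>j=1..n. ipd d v (M j *\<^sub>v v))"
    if v: "v \<in> carrier_vec d" for v
  proof -
    have "ipd d v (Mq_of d n M *\<^sub>v v) = (\<Sum>a<d. \<Sum>b<d. cnj (v $ a) * ((1\<^sub>m d :: complex mat) $$ (a, b) - (\<Sum>j=1..n. M j $$ (a, b))) * v $ b)"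
      unfolding qf[OF Mqc v] by (intro sum.cong refl) (simp add: Mq_of_def)
    also have "\<dots> = (\<Sum>a<d. \<Sum>b<d. cnj (v $ a) * (1\<^sub>m d :: complex mat) $$ (a, b) * v $ b)
       - (\<Sum>a<d. \<Sum>b<d. \<Sum>j=1..n. cnj (v $ a) * M j $$ (a, b) * v $ b)"
      by (simp add: sum_subtractf[symmetric] algebra_simps sum_distrib_left sum_distrib_right)
    also have "(\<Sum>a<d. \<Sum>b<d. cnj (v $ a) * (1\<^sub>m d :: complex mat) $$ (a, b) * v $ b) = ipd d v (1\<^sub>m d *\<^sub>v v)"
      by (rule qf[symmetric]) (simp_all add: v)
    also have "1\<^sub>m d *\<^sub>v v = v" using v by simp
    also have "(\<Sum>a<d. \<Sum>b<d. \<Sum>j=1..n. cnj (v $ a) * M j $$ (a, b) * v $ b)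
        = (\<Sum>j=1..n. \<Sum>a<d. \<Sum>b<d. cnj (v $ a) * M j $$ (a, b) * v $ b)"
      by (subst sum.swap) (rule sum.cong[OF refl], rule sum.swap)
    also have "\<dots> = (\<Sum>j=1..n. ipd d v (M j *\<^sub>v v))"
      unfolding M_def by (intro sum.cong refl) (simp add: qf[OF r1_carrier v])
    finally show ?thesis .
  qed
  have psdq: "psd_op d (Mq_of d n M)"
  proof (rule psd_qfI[OF herm])
    fix v :: "complex vec" assume v: "v \<in> carrier_vec d"
    have e: "ipd d v (Mq_of d n M *\<^sub>v v) = ipd d v v - complex_of_real (\<Sum>j=1..n. t j * (cmod (ipd d (u j) v))\<^sup>2)"
    proof -
      have "(\<Sum>j=1..n. ipd d v (M j *\<^sub>v v)) = complex_of_real (\<Sum>j=1..n. t j * (cmod (ipd d (u j) v))\<^sup>2)"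
        unfolding M_def qf_r1[OF v] by simp
      thus ?thesis using qfq[OF v] by simp
    qed
    have "(\<Sum>j=1..n. t j * (cmod (ipd d (u j) v))\<^sup>2) \<le> (\<Sum>j=1..n. t j * (Re (ipd d (u j) (u j)) * Re (ipd d v v)))"
      using t u cauchy_schwarz[OF _ v] by (intro sum_mono mult_left_mono) auto
    also have "\<dots> = (\<Sum>j=1..n. t j * Re (ipd d (u j) (u j))) * Re (ipd d v v)"
      by (simp add: sum_distrib_right mult.assoc)
    also have "\<dots> \<le> 1 * Re (ipd d v v)" using s ipd_self_nonneg[of d v] by (intro mult_right_mono) auto
    finally show "Im (ipd d v (Mq_of d n M *\<^sub>v v)) = 0 \<and> 0 \<le> Re (ipd d v (Mq_of d n M *\<^sub>v v))"
      unfolding e using ipd_self_Re(2)[of d v] by simp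
  qed
  show ?thesis unfolding measurement_def using psdM psdq by (auto simp: Mq_of_def)
qed

lemma bilin_lc: assumes A: "A \<in> carrier_mat d d" and b: "\<And>j. j < k \<Longrightarrow> b j \<in> carrier_vec d"
  shows "ipd d (lc d k c b) (A *\<^sub>v lc d k c b) = (\<Sum>j<k. \<Sum>l<k. cnj (c j) * c l * ipd d (b j) (A *\<^sub>v b l))"
proof -
  have "ipd d (lc d k c b) (A *\<^sub>v lc d k c b) = ipd d (lc d k c b) (lc d k c (\<lambda>l. A *\<^sub>v b l))"
    using mat_lc[OF A b] by simp
  also have "\<dots> = (\<Sum>j<k. cnj (c j) * ipd d (b j) (lc d k c (\<lambda>l. A *\<^sub>v b l)))" by (rule ipd_lc_left)
  also have "\<dots> = (\<Sum>j<k. cnj (c j) * (\<Sum>l<k. c l * ipd d (b j) (A *\<^sub>v b l)))" by (simp only: ipd_lc_right)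
  also have "\<dots> = (\<Sum>j<k. \<Sum>l<k. cnj (c j) * c l * ipd d (b j) (A *\<^sub>v b l))"
    by (simp add: sum_distrib_left mult.assoc)
  finally show ?thesis .
qed

lemma reorg: "cnj (complex_of_real a * x) * (complex_of_real bb * g) * (complex_of_real c * y) =
   complex_of_real (a * bb * c) * (cnj x * y * g)"
  by (simp add: algebra_simps)

lemma key:
  fixes P R :: "complex mat" and b :: "nat \<Rightarrow> complex vec" and \<mu> :: "nat \<Rightarrow> real"
  assumes R: "hermitian_op d R" and P: "psd_op d P" and e: "e > 0"
    and ob: "orthonormal d d b" and ev: "\<forall>j<d. R *\<^sub>v b j = complex_of_real (\<mu> j) \<cdot>\<^sub>v b j"
    and mu: "\<forall>j<d. \<mu> j \<ge> 0" and lam: "lam > 0" and mulam: "\<forall>j<d. \<mu> j \<noteq> 0 \<longrightarrow> lam \<le> \<mu> j"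
    and ker: "\<forall>j<d. \<mu> j = 0 \<longrightarrow> P *\<^sub>v b j = 0\<^sub>v d"
    and trR: "Re (trace_op R) = 1" and trP: "Re (trace_op P) = 1" and d: "d > 0"
  shows "\<exists>u \<kappa>. u \<in> carrier_vec d \<and> \<kappa> \<ge> e \<and>
     (\<forall>v\<in>carrier_vec d. e * Re (ipd d v (P *\<^sub>v v)) \<le> \<kappa> * Re (ipd d v (R *\<^sub>v v))) \<and>
     ipd d u (R *\<^sub>v u) = 1 \<and> complex_of_real e * ipd d u (P *\<^sub>v u) = complex_of_real \<kappa> \<and>
     Re (ipd d u u) \<le> 1 / lam"
proof -
  have Rc: "R \<in> carrier_mat d d" using R by (rule hermitian_carrier)
  have Pc: "P \<in> carrier_mat d d" using P by (rule psd_carrier)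
  have PH: "hermitian_op d P" using P by (rule psd_hermitian)
  have bc: "\<And>j. j < d \<Longrightarrow> b j \<in> carrier_vec d" using ob unfolding orthonormal_def by auto
  define s where "s j = (if \<mu> j > 0 then 1 / sqrt (\<mu> j) else 0)" for j
  have sq: "sqrt (\<mu> j) * s j = 1" if "\<mu> j > 0" for j using that unfolding s_def by simp
  have s0: "s j = 0" if "\<not> \<mu> j > 0" for j using that unfolding s_def by simp
  define G where "G j l = ipd d (b j) (P *\<^sub>v b l)" for j l
  have G0: "G j l = 0" if "j < d" "l < d" "\<not> (\<mu> j > 0 \<and> \<mu> l > 0)" for j l
  proof (cases "\<mu> l > 0")
    case True
    hence "\<mu> j = 0" using that mu by force
    hence "P *\<^sub>v b j = 0\<^sub>v d" using ker that by auto
    hence "ipd d (P *\<^sub>v b j) (b l) = 0" by (simp add: ipd_def)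
    thus ?thesis unfolding G_def using hermitian_adj[OF PH bc[OF that(1)] bc[OF that(2)]] by simp
  next
    case False
    hence "\<mu> l = 0" using that mu by force
    hence "P *\<^sub>v b l = 0\<^sub>v d" using ker that by auto
    thus ?thesis unfolding G_def by (simp add: ipd_def)
  qed
  define K where "K = mat d d (\<lambda>(j, l). complex_of_real (e * s j * s l) * G j l)"
  have Kc: "K \<in> carrier_mat d d" unfolding K_def by simp
  have Kh: "hermitian_op d K"
  proof -
    have "K $$ (l, j) = cnj (K $$ (j, l))" if "j < d" "l < d" for j l
    proof -
      have "cnj (G j l) = G l j"
        unfolding G_def ipd_cnj using hermitian_adj[OF PH bc[OF that(2)] bc[OF that(1)]] by simp
      thus ?thesis unfolding K_def using that by (simp add: mult.commute mult.left_commute)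
    qed
    thus ?thesis unfolding hermitian_op_def using Kc by blast
  qed
  obtain w \<kappa>l where ow: "orthonormal d d w" and evK: "\<forall>p<d. K *\<^sub>v w p = complex_of_real (\<kappa>l p) \<cdot>\<^sub>v w p"
    using spectral[OF Kh] by auto
  have wc: "\<And>p. p < d \<Longrightarrow> w p \<in> carrier_vec d" using ow unfolding orthonormal_def by auto
  obtain p0 where p0: "p0 < d" "\<And>q. q < d \<Longrightarrow> \<kappa>l q \<le> \<kappa>l p0"
  proof -
    have fin: "finite (\<kappa>l ` {..<d})" and ne: "\<kappa>l ` {..<d} \<noteq> {}" using d by auto
    obtain p where "p \<in> {..<d}" "\<kappa>l p = Max (\<kappa>l ` {..<d})" using Max_in[OF fin ne] by auto
    thus ?thesis using that[of p] Max_ge[OF fin] by auto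
  qed
  define \<kappa> where "\<kappa> = \<kappa>l p0"
  define w0 where "w0 = w p0"
  have w0c: "w0 \<in> carrier_vec d" unfolding w0_def using wc p0 by simp
  have w0n: "ipd d w0 w0 = 1" using ow p0 unfolding orthonormal_def w0_def by auto
  have Kw0: "K *\<^sub>v w0 = complex_of_real \<kappa> \<cdot>\<^sub>v w0" using evK p0 unfolding w0_def \<kappa>_def by auto
  have ray: "Re (ipd d y (K *\<^sub>v y)) \<le> \<kappa> * Re (ipd d y y)" if y: "y \<in> carrier_vec d" for y
  proof -
    have "Re (ipd d y (K *\<^sub>v y)) = (\<Sum>p<d. \<kappa>l p * (cmod (ipd d (w p) y))\<^sup>2)"
      unfolding eig_qf[OF Kc ow evK y] by simp
    also have "\<dots> \<le> (\<Sum>p<d. \<kappa> * (cmod (ipd d (w p) y))\<^sup>2)"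
      using p0(2) unfolding \<kappa>_def by (intro sum_mono mult_right_mono) auto
    also have "\<dots> = \<kappa> * Re (ipd d y y)"
      unfolding parseval[OF ow y] by (simp add: sum_distrib_left)
    finally show ?thesis .
  qed
  define yv where "yv v = vec d (\<lambda>j. complex_of_real (sqrt (\<mu> j)) * ipd d (b j) v)" for v
  have yvc: "yv v \<in> carrier_vec d" for v unfolding yv_def by simp
  have I1: "complex_of_real e * ipd d v (P *\<^sub>v v) = ipd d (yv v) (K *\<^sub>v yv v)" if v: "v \<in> carrier_vec d" for v
  proof -
    define c where "c j = ipd d (b j) v" for j
    have "complex_of_real e * ipd d v (P *\<^sub>v v) = complex_of_real e * ipd d (lc d d c b) (P *\<^sub>v lc d d c b)"
      using orthonormal_expand[OF ob v] unfolding c_def by simp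
    also have "\<dots> = complex_of_real e * (\<Sum>j<d. \<Sum>l<d. cnj (c j) * c l * G j l)"
      unfolding G_def using bilin_lc[OF Pc bc, where c=c] by simp
    also have "\<dots> = (\<Sum>j<d. \<Sum>l<d. complex_of_real e * (cnj (c j) * c l * G j l))"
      by (simp add: sum_distrib_left)
    also have "\<dots> = (\<Sum>j<d. \<Sum>l<d. cnj (yv v $ j) * K $$ (j, l) * yv v $ l)"
    proof (intro sum.cong refl)
      fix j l assume j: "j \<in> {..<d}" and l: "l \<in> {..<d}"
      have "cnj (yv v $ j) * K $$ (j, l) * yv v $ l =
          cnj (complex_of_real (sqrt (\<mu> j)) * c j) * (complex_of_real (e * s j * s l) * G j l) * (complex_of_real (sqrt (\<mu> l)) * c l)"
        using j l unfolding yv_def K_def c_def by simp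
      also have "\<dots> = complex_of_real (sqrt (\<mu> j) * (e * s j * s l) * sqrt (\<mu> l)) * (cnj (c j) * c l * G j l)"
        by (rule reorg)
      also have "\<dots> = complex_of_real e * (cnj (c j) * c l * G j l)"
      proof (cases "\<mu> j > 0 \<and> \<mu> l > 0")
        case True
        have "sqrt (\<mu> j) * (e * s j * s l) * sqrt (\<mu> l) = e * (sqrt (\<mu> j) * s j) * (sqrt (\<mu> l) * s l)"
          by (simp add: algebra_simps)
        also have "\<dots> = e" using sq True by simp
        finally have X: "sqrt (\<mu> j) * (e * s j * s l) * sqrt (\<mu> l) = e" .
        show ?thesis by (simp only: X)
      next
        case False
        thus ?thesis using G0 j l by simp
      qed
      finally show "complex_of_real e * (cnj (c j) * c l * G j l) = cnj (yv v $ j) * K $$ (j, l) * yv v $ l" by simp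
    qed
    also have "\<dots> = ipd d (yv v) (K *\<^sub>v yv v)" by (rule qf[OF Kc yvc, symmetric])
    finally show ?thesis .
  qed
  have I2: "ipd d v (R *\<^sub>v v) = ipd d (yv v) (yv v)" if v: "v \<in> carrier_vec d" for v
  proof -
    have "ipd d v (R *\<^sub>v v) = complex_of_real (\<Sum>j<d. \<mu> j * (cmod (ipd d (b j) v))\<^sup>2)"
      unfolding eig_qf[OF Rc ob ev v] by simp
    also have "(\<Sum>j<d. \<mu> j * (cmod (ipd d (b j) v))\<^sup>2) = (\<Sum>j<d. (cmod (yv v $ j))\<^sup>2)"
    proof (intro sum.cong refl)
      fix j assume j: "j \<in> {..<d}"
      have "cmod (yv v $ j) = sqrt (\<mu> j) * cmod (ipd d (b j) v)"
        using j mu unfolding yv_def by (simp add: norm_mult)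
      thus "\<mu> j * (cmod (ipd d (b j) v))\<^sup>2 = (cmod (yv v $ j))\<^sup>2"
        using j mu by (simp add: power_mult_distrib)
    qed
    also have "complex_of_real \<dots> = ipd d (yv v) (yv v)" by (simp only: ipd_self)
    finally show ?thesis .
  qed
  have P1: "\<forall>v\<in>carrier_vec d. e * Re (ipd d v (P *\<^sub>v v)) \<le> \<kappa> * Re (ipd d v (R *\<^sub>v v))"
  proof
    fix v :: "complex vec" assume v: "v \<in> carrier_vec d"
    have "e * Re (ipd d v (P *\<^sub>v v)) = Re (complex_of_real e * ipd d v (P *\<^sub>v v))" by simp
    also have "\<dots> = Re (ipd d (yv v) (K *\<^sub>v yv v))" using I1[OF v] by simp
    also have "\<dots> \<le> \<kappa> * Re (ipd d (yv v) (yv v))" by (rule ray[OF yvc])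
    also have "\<dots> = \<kappa> * Re (ipd d v (R *\<^sub>v v))" using I2[OF v] by simp
    finally show "e * Re (ipd d v (P *\<^sub>v v)) \<le> \<kappa> * Re (ipd d v (R *\<^sub>v v))" .
  qed
  have P4: "\<kappa> \<ge> e"
  proof -
    have diag: "ipd d (unit_vec d a) (A *\<^sub>v unit_vec d a) = A $$ (a, a)" if "A \<in> carrier_mat d d" "a < d" for A a
      using that by (simp add: ipd_unit_left mat_unit_index)
    have trA: "Re (trace_op A) = (\<Sum>a<d. Re (ipd d (unit_vec d a) (A *\<^sub>v unit_vec d a)))" if "A \<in> carrier_mat d d" for A
      unfolding trace_op_def using that diag by simp
    have "e = e * Re (trace_op P)" using trP by simp
    also have "\<dots> = (\<Sum>a<d. e * Re (ipd d (unit_vec d a) (P *\<^sub>v unit_vec d a)))"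
      unfolding trA[OF Pc] by (simp add: sum_distrib_left)
    also have "\<dots> \<le> (\<Sum>a<d. \<kappa> * Re (ipd d (unit_vec d a) (R *\<^sub>v unit_vec d a)))"
      using P1 by (intro sum_mono) auto
    also have "\<dots> = \<kappa> * Re (trace_op R)"
      unfolding trA[OF Rc] by (simp add: sum_distrib_left)
    also have "\<dots> = \<kappa>" using trR by simp
    finally show ?thesis .
  qed
  have kpos: "\<kappa> > 0" using P4 e by simp
  have w0supp: "w0 $ j = 0" if j: "j < d" "\<not> \<mu> j > 0" for j
  proof -
    have "(K *\<^sub>v w0) $ j = (\<Sum>l<d. K $$ (j, l) * w0 $ l)" by (rule mv_index[OF Kc w0c j(1)])
    also have "\<dots> = 0" using j s0 unfolding K_def by (intro sum.neutral) auto
    finally have "complex_of_real \<kappa> * w0 $ j = 0" using Kw0 j w0c by simp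
    thus ?thesis using kpos by simp
  qed
  define u where "u = lc d d (\<lambda>j. complex_of_real (s j) * w0 $ j) b"
  have uc: "u \<in> carrier_vec d" unfolding u_def by simp
  have cu: "ipd d (b j) u = complex_of_real (s j) * w0 $ j" if "j < d" for j
    unfolding u_def using ortho_lc[OF ob that] .
  have yvu: "yv u = w0"
  proof (rule eq_vecI)
    show "dim_vec (yv u) = dim_vec w0" using w0c unfolding yv_def by simp
    fix j assume "j < dim_vec w0"
    hence j: "j < d" using w0c by simp
    show "yv u $ j = w0 $ j"
    proof (cases "\<mu> j > 0")
      case True
      have "yv u $ j = complex_of_real (sqrt (\<mu> j) * s j) * w0 $ j"
        unfolding yv_def using j cu by simp
      thus ?thesis using sq[OF True] by simp
    next
      case False
      thus ?thesis unfolding yv_def using j cu w0supp by simp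
    qed
  qed
  have uR: "ipd d u (R *\<^sub>v u) = 1" using I2[OF uc] yvu w0n by simp
  have uP: "complex_of_real e * ipd d u (P *\<^sub>v u) = complex_of_real \<kappa>"
    using I1[OF uc] yvu Kw0 w0c w0n by (simp add: ipd_smult_right)
  have uu: "Re (ipd d u u) \<le> 1 / lam"
  proof -
    have "ipd d u u = (\<Sum>j<d. complex_of_real ((s j)\<^sup>2 * (cmod (w0 $ j))\<^sup>2))"
      unfolding u_def parseval_lc[OF ob]
      by (intro sum.cong refl) (simp only: cnj_mult_self norm_mult norm_of_real power_mult_distrib power2_abs)
    hence "Re (ipd d u u) = (\<Sum>j<d. (s j)\<^sup>2 * (cmod (w0 $ j))\<^sup>2)"
      by (simp only: Re_sum Re_complex_of_real)
    also have "\<dots> \<le> (\<Sum>j<d. (1 / lam) * (cmod (w0 $ j))\<^sup>2)"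
    proof (intro sum_mono mult_right_mono)
      fix j assume j: "j \<in> {..<d}"
      show "(s j)\<^sup>2 \<le> 1 / lam"
      proof (cases "\<mu> j > 0")
        case True
        hence "lam \<le> \<mu> j" using mulam j by auto
        moreover have "(s j)\<^sup>2 = 1 / \<mu> j" using True unfolding s_def by (simp add: power_divide)
        ultimately show ?thesis using lam by (simp add: frac_le)
      next
        case False
        thus ?thesis using s0 lam by simp
      qed
    qed simp
    also have "\<dots> = 1 / lam * Re (ipd d w0 w0)" by (simp add: ipd_self_Re sum_distrib_left)
    also have "\<dots> = 1 / lam" using w0n by simp
    finally show ?thesis .
  qed
  show ?thesis using uc P4 P1 uR uP uu by blast
qed

lemma ratio_le: assumes M: "psd_op d M" and X: "X \<in> carrier_mat d d" and Y: "Y \<in> carrier_mat d d"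
  and h: "\<forall>v\<in>carrier_vec d. e * Re (ipd d v (X *\<^sub>v v)) \<le> \<kappa> * Re (ipd d v (Y *\<^sub>v v))"
  shows "e * tr_re X M \<le> \<kappa> * tr_re Y M"
proof -
  obtain w \<beta> where wb: "\<forall>p<d. \<beta> p \<ge> 0 \<and> w p \<in> carrier_vec d"
    and tr: "\<forall>A \<in> carrier_mat d d. trace_op (A * M) = (\<Sum>p<d. complex_of_real (\<beta> p) * ipd d (w p) (A *\<^sub>v w p))"
    using psd_trace_decomp[OF M] by blast
  have "e * tr_re X M = (\<Sum>p<d. \<beta> p * (e * Re (ipd d (w p) (X *\<^sub>v w p))))"
    unfolding tr_re_def using tr X by (simp add: sum_distrib_left algebra_simps)
  also have "\<dots> \<le> (\<Sum>p<d. \<beta> p * (\<kappa> * Re (ipd d (w p) (Y *\<^sub>v w p))))"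
    using wb h by (intro sum_mono mult_left_mono) auto
  also have "\<dots> = \<kappa> * tr_re Y M"
    unfolding tr_re_def using tr Y by (simp add: sum_distrib_left algebra_simps)
  finally show ?thesis .
qed

lemma meas_carrier: assumes "measurement d n Mq M"
  shows "Mq \<in> carrier_mat d d" "\<And>j. j \<in> {1..n} \<Longrightarrow> M j \<in> carrier_mat d d"
    "psd_op d Mq" "\<And>j. j \<in> {1..n} \<Longrightarrow> psd_op d (M j)"
  using assms psd_carrier unfolding measurement_def by blast+

lemma meas_trace_le: assumes m: "measurement d n Mq M" and X: "psd_op d X"
  and trX: "Re (trace_op X) = 1" and i: "i \<in> {1..n}"
  shows "tr_re X (M i) \<le> 1"
proof -
  note mc = meas_carrier[OF m]
  have Xc: "X \<in> carrier_mat d d" using X by (rule psd_carrier)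
  have sumid: "\<And>a b. a < d \<Longrightarrow> b < d \<Longrightarrow> Mq $$ (b, a) + (\<Sum>j=1..n. M j $$ (b, a)) = (if b = a then 1 else 0)"
  proof -
    fix a b assume ab: "a < d" "b < d"
    have "\<forall>j<d. \<forall>k<d. Mq $$ (j, k) + (\<Sum>i=1..n. M i $$ (j, k)) = (1\<^sub>m d :: complex mat) $$ (j, k)"
      using m unfolding measurement_def by blast
    hence "Mq $$ (b, a) + (\<Sum>i=1..n. M i $$ (b, a)) = (1\<^sub>m d :: complex mat) $$ (b, a)" using ab by blast
    thus "Mq $$ (b, a) + (\<Sum>j=1..n. M j $$ (b, a)) = (if b = a then 1 else 0)" using ab by simp
  qed
  have "trace_op (X * Mq) + (\<Sum>j=1..n. trace_op (X * M j))
      = (\<Sum>a<d. \<Sum>b<d. X $$ (a, b) * Mq $$ (b, a)) + (\<Sum>j=1..n. \<Sum>a<d. \<Sum>b<d. X $$ (a, b) * M j $$ (b, a))"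
    using trace_prod[OF Xc] mc by simp
  also have "(\<Sum>j=1..n. \<Sum>a<d. \<Sum>b<d. X $$ (a, b) * M j $$ (b, a)) = (\<Sum>a<d. \<Sum>b<d. \<Sum>j=1..n. X $$ (a, b) * M j $$ (b, a))"
    by (subst sum.swap) (rule sum.cong[OF refl], rule sum.swap)
  also have "(\<Sum>a<d. \<Sum>b<d. X $$ (a, b) * Mq $$ (b, a)) + \<dots> = (\<Sum>a<d. \<Sum>b<d. X $$ (a, b) * (Mq $$ (b, a) + (\<Sum>j=1..n. M j $$ (b, a))))"
    by (simp add: sum.distrib sum_distrib_left distrib_left)
  also have "\<dots> = (\<Sum>a<d. \<Sum>b<d. X $$ (a, b) * (if a = b then 1 else 0))"
  proof (intro sum.cong refl)
    fix a b assume "a \<in> {..<d}" "b \<in> {..<d}"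
    thus "X $$ (a, b) * (Mq $$ (b, a) + (\<Sum>j=1..n. M j $$ (b, a))) = X $$ (a, b) * (if a = b then 1 else 0)"
      using sumid[of a b] by auto
  qed
  also have "\<dots> = (\<Sum>a<d. X $$ (a, a))"
    by (rule sum.cong[OF refl], rule sum_delta_mult) simp
  also have "\<dots> = trace_op X" unfolding trace_op_def using Xc by simp
  finally have eq: "Re (trace_op (X * Mq)) + (\<Sum>j=1..n. Re (trace_op (X * M j))) = 1"
    using trX by (metis Re_sum plus_complex.sel(1))
  have nn: "\<And>j. j \<in> {1..n} \<Longrightarrow> Re (trace_op (X * M j)) \<ge> 0"
    using psd_trace_nonneg[OF X] mc(4) by blast
  have "Re (trace_op (X * M i)) \<le> (\<Sum>j=1..n. Re (trace_op (X * M j)))"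
    using nn i by (intro member_le_sum) auto
  moreover have "Re (trace_op (X * Mq)) \<ge> 0" using psd_trace_nonneg[OF X mc(3)] .
  ultimately show ?thesis unfolding tr_re_def using eq by linarith
qed

lemma rho0_carrier: "rho0 d n \<eta> \<rho> \<in> carrier_mat d d"
  unfolding rho0_def by simp

lemma rho0_index: "a < d \<Longrightarrow> b < d \<Longrightarrow> rho0 d n \<eta> \<rho> $$ (a, b) = (\<Sum>i=1..n. complex_of_real (\<eta> i) * \<rho> i $$ (a, b))"
  unfolding rho0_def by simp

lemma rho0_qf: assumes rc: "\<forall>i\<in>{1..n}. \<rho> i \<in> carrier_mat d d" and v: "v \<in> carrier_vec d"
  shows "ipd d v (rho0 d n \<eta> \<rho> *\<^sub>v v) = (\<Sum>i=1..n. complex_of_real (\<eta> i) * ipd d v (\<rho> i *\<^sub>v v))"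
proof -
  have "ipd d v (rho0 d n \<eta> \<rho> *\<^sub>v v) = (\<Sum>a<d. \<Sum>b<d. \<Sum>i=1..n. complex_of_real (\<eta> i) * (cnj (v $ a) * \<rho> i $$ (a, b) * v $ b))"
    unfolding qf[OF rho0_carrier v]
    by (intro sum.cong refl) (simp add: rho0_index sum_distrib_left sum_distrib_right algebra_simps)
  also have "\<dots> = (\<Sum>i=1..n. \<Sum>a<d. \<Sum>b<d. complex_of_real (\<eta> i) * (cnj (v $ a) * \<rho> i $$ (a, b) * v $ b))"
    by (subst sum.swap) (rule sum.cong[OF refl], rule sum.swap)
  also have "\<dots> = (\<Sum>i=1..n. complex_of_real (\<eta> i) * ipd d v (\<rho> i *\<^sub>v v))"
  proof (rule sum.cong[OF refl])
    fix i assume "i \<in> {1..n}"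
    hence "\<rho> i \<in> carrier_mat d d" using rc by auto
    thus "(\<Sum>a<d. \<Sum>b<d. complex_of_real (\<eta> i) * (cnj (v $ a) * \<rho> i $$ (a, b) * v $ b)) = complex_of_real (\<eta> i) * ipd d v (\<rho> i *\<^sub>v v)"
      by (simp add: qf[OF _ v] sum_distrib_left)
  qed
  finally show ?thesis .
qed

lemma rho0_psd: assumes ps: "\<forall>i\<in>{1..n}. psd_op d (\<rho> i)" and eta: "\<forall>i\<in>{1..n}. \<eta> i > 0"
  shows "psd_op d (rho0 d n \<eta> \<rho>)"
proof (rule psd_qfI)
  have rc: "\<forall>i\<in>{1..n}. \<rho> i \<in> carrier_mat d d" using ps psd_carrier by blast
  have h: "\<And>i j k. i \<in> {1..n} \<Longrightarrow> j < d \<Longrightarrow> k < d \<Longrightarrow> cnj (\<rho> i $$ (j, k)) = \<rho> i $$ (k, j)"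
  proof -
    fix i j k assume a: "i \<in> {1..n}" "j < d" "k < d"
    hence "\<rho> i $$ (k, j) = cnj (\<rho> i $$ (j, k))" using ps unfolding psd_op_def hermitian_op_def by blast
    thus "cnj (\<rho> i $$ (j, k)) = \<rho> i $$ (k, j)" by simp
  qed
  show "hermitian_op d (rho0 d n \<eta> \<rho>)"
    unfolding hermitian_op_def using rho0_carrier
  proof (intro conjI allI impI)
    fix j k assume jk: "j < d" "k < d"
    show "rho0 d n \<eta> \<rho> $$ (k, j) = cnj (rho0 d n \<eta> \<rho> $$ (j, k))"
      unfolding rho0_index[OF jk] rho0_index[OF jk(2,1)] cnj_sum
      by (intro sum.cong refl) (simp add: h[OF _ jk])
  qed
  fix v :: "complex vec" assume v: "v \<in> carrier_vec d"
  have q: "ipd d v (rho0 d n \<eta> \<rho> *\<^sub>v v) = (\<Sum>i=1..n. complex_of_real (\<eta> i) * ipd d v (\<rho> i *\<^sub>v v))"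
    by (rule rho0_qf[OF rc v])
  have "Im (ipd d v (rho0 d n \<eta> \<rho> *\<^sub>v v)) = (\<Sum>i=1..n. \<eta> i * Im (ipd d v (\<rho> i *\<^sub>v v)))"
    unfolding q by (simp add: Im_sum)
  also have "\<dots> = 0" using psd_qf[OF _ v] ps by (intro sum.neutral) auto
  finally have "Im (ipd d v (rho0 d n \<eta> \<rho> *\<^sub>v v)) = 0" .
  moreover have "Re (ipd d v (rho0 d n \<eta> \<rho> *\<^sub>v v)) = (\<Sum>i=1..n. \<eta> i * Re (ipd d v (\<rho> i *\<^sub>v v)))"
    unfolding q by (simp add: Re_sum)
  moreover have "(\<Sum>i=1..n. \<eta> i * Re (ipd d v (\<rho> i *\<^sub>v v))) \<ge> 0"
  proof (intro sum_nonneg mult_nonneg_nonneg)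
    fix i assume i: "i \<in> {1..n}"
    show "0 \<le> \<eta> i" using eta i by (simp add: less_imp_le)
    show "0 \<le> Re (ipd d v (\<rho> i *\<^sub>v v))" using psd_qf[OF _ v] ps i by auto
  qed
  ultimately show "Im (ipd d v (rho0 d n \<eta> \<rho> *\<^sub>v v)) = 0 \<and> 0 \<le> Re (ipd d v (rho0 d n \<eta> \<rho> *\<^sub>v v))"
    by simp
qed

lemma rho0_trace: assumes rc: "\<forall>i\<in>{1..n}. \<rho> i \<in> carrier_mat d d"
  and tr: "\<forall>i\<in>{1..n}. trace_op (\<rho> i) = 1" and s: "(\<Sum>i=1..n. \<eta> i) = 1"
  shows "trace_op (rho0 d n \<eta> \<rho>) = 1"
proof -
  have "trace_op (rho0 d n \<eta> \<rho>) = (\<Sum>a<d. \<Sum>i=1..n. complex_of_real (\<eta> i) * \<rho> i $$ (a, a))"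
    unfolding trace_op_def using rho0_carrier[of d n \<eta> \<rho>] by (simp add: rho0_index)
  also have "\<dots> = (\<Sum>i=1..n. complex_of_real (\<eta> i) * trace_op (\<rho> i))"
    by (subst sum.swap) (intro sum.cong refl, use rc in \<open>auto simp: trace_op_def sum_distrib_left\<close>)
  also have "\<dots> = complex_of_real (\<Sum>i=1..n. \<eta> i)" using tr by simp
  finally show ?thesis using s by (metis of_real_1)
qed


lemma sum_if_single: "(i::nat) \<in> {1..n} \<Longrightarrow> (\<Sum>j=1..n. (if j = i then (a::real) else 0) * q) = a * q"
proof -
  assume i: "i \<in> {1..n}"
  have "(\<Sum>j=1..n. (if j = i then (a::real) else 0) * q) = (\<Sum>j\<in>{1..n}. if j = i then a * q else 0)"
    by (intro sum.cong) auto
  also have "\<dots> = a * q" using i by (subst sum.delta) auto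
  finally show ?thesis .
qed

lemma conf_eq:
  assumes i: "i \<in> {1..n}" and P: "psd_op d (\<rho> i)" and u: "u \<in> carrier_vec d"
    and P1: "\<forall>v\<in>carrier_vec d. \<eta> i * Re (ipd d v (\<rho> i *\<^sub>v v)) \<le> \<kappa> * Re (ipd d v (rho0 d n \<eta> \<rho> *\<^sub>v v))"
    and uR: "ipd d u (rho0 d n \<eta> \<rho> *\<^sub>v u) = 1"
    and uP: "complex_of_real (\<eta> i) * ipd d u (\<rho> i *\<^sub>v u) = complex_of_real \<kappa>"
  shows "conf d n \<eta> \<rho> i = \<kappa>"
proof -
  define R where "R = rho0 d n \<eta> \<rho>"
  have Rc: "R \<in> carrier_mat d d" unfolding R_def by (rule rho0_carrier)
  have Pc: "\<rho> i \<in> carrier_mat d d" using P by (rule psd_carrier)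
  define q where "q = Re (ipd d u u)"
  have "u \<noteq> 0\<^sub>v d"
  proof
    assume "u = 0\<^sub>v d"
    hence "ipd d u (R *\<^sub>v u) = 0" by (simp add: ipd_def)
    thus False using uR unfolding R_def by simp
  qed
  hence "ipd d u u \<noteq> 0" using ipd_self_zero[OF u] by auto
  hence "q \<noteq> 0" unfolding q_def using ipd_self_Re(2)[of d u] by (simp add: complex_eq_iff)
  hence qp: "q > 0" using ipd_self_nonneg[of d u] unfolding q_def by simp
  define t where "t j = (if j = i then 1 / q else 0)" for j
  define Mm where "Mm = (\<lambda>j. r1 d (complex_of_real (t j)) u)"
  have meas: "measurement d n (Mq_of d n Mm) Mm"
    unfolding Mm_def
  proof (rule meas_construct)
    show "\<forall>j\<in>{1..n}. u \<in> carrier_vec d" using u by simp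
    show "\<forall>j\<in>{1..n}. 0 \<le> t j" unfolding t_def using qp by simp
    show "(\<Sum>j=1..n. t j * Re (ipd d u u)) \<le> 1"
      unfolding t_def q_def[symmetric] using sum_if_single[OF i, of "1 / q" q] qp by simp
  qed
  have Mi: "Mm i = r1 d (complex_of_real (1 / q)) u" unfolding Mm_def t_def by simp
  have trR: "tr_re R (Mm i) = 1 / q"
    unfolding tr_re_def Mi trace_r1[OF Rc u] using uR unfolding R_def by simp
  have trP: "\<eta> i * tr_re (\<rho> i) (Mm i) = 1 / q * \<kappa>"
  proof -
    have "\<eta> i * tr_re (\<rho> i) (Mm i) = 1 / q * Re (complex_of_real (\<eta> i) * ipd d u (\<rho> i *\<^sub>v u))"
      unfolding tr_re_def Mi trace_r1[OF Pc u] by simp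
    thus ?thesis using uP by simp
  qed
  define S where "S = {\<eta> i * tr_re (\<rho> i) (M i) / tr_re R (M i) | Mq M. measurement d n Mq M \<and> tr_re R (M i) > 0}"
  have conf_S: "conf d n \<eta> \<rho> i = Sup S" unfolding conf_def S_def R_def ..
  have mem: "\<kappa> \<in> S"
  proof -
    have "\<eta> i * tr_re (\<rho> i) (Mm i) / tr_re R (Mm i) = \<kappa>" using trR trP qp by simp
    moreover have "tr_re R (Mm i) > 0" using trR qp by simp
    ultimately show ?thesis unfolding S_def using meas by blast
  qed
  have ub: "x \<le> \<kappa>" if "x \<in> S" for x
  proof -
    obtain Mq M where x: "x = \<eta> i * tr_re (\<rho> i) (M i) / tr_re R (M i)"
      and m: "measurement d n Mq M" and pos: "tr_re R (M i) > 0"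
      using \<open>x \<in> S\<close> unfolding S_def by blast
    have "psd_op d (M i)" using meas_carrier(4)[OF m i] .
    from ratio_le[OF this Pc Rc] P1 have "\<eta> i * tr_re (\<rho> i) (M i) \<le> \<kappa> * tr_re R (M i)"
      unfolding R_def by simp
    thus ?thesis unfolding x using pos by (simp add: divide_le_eq)
  qed
  show ?thesis unfolding conf_S by (rule cSup_eq_maximum[OF mem ub])
qed


lemma qf_lincomb: assumes A: "A \<in> carrier_mat d d" and B: "B \<in> carrier_mat d d" and v: "v \<in> carrier_vec d"
  shows "ipd d v ((a \<cdot>\<^sub>m A - b \<cdot>\<^sub>m B) *\<^sub>v v) = a * ipd d v (A *\<^sub>v v) - b * ipd d v (B *\<^sub>v v)"
proof -
  have C: "a \<cdot>\<^sub>m A - b \<cdot>\<^sub>m B \<in> carrier_mat d d" using B by (intro minus_carrier_mat smult_carrier_mat)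
  have "ipd d v ((a \<cdot>\<^sub>m A - b \<cdot>\<^sub>m B) *\<^sub>v v) = (\<Sum>x<d. \<Sum>y<d. a * (cnj (v $ x) * A $$ (x, y) * v $ y) - b * (cnj (v $ x) * B $$ (x, y) * v $ y))"
    unfolding qf[OF C v] using A B by (intro sum.cong refl) (simp add: algebra_simps)
  also have "\<dots> = a * ipd d v (A *\<^sub>v v) - b * ipd d v (B *\<^sub>v v)"
    unfolding qf[OF A v] qf[OF B v] by (simp add: sum_subtractf sum_distrib_left)
  finally show ?thesis .
qed

lemma qf_one_pos: assumes u: "u \<in> carrier_vec d" and A: "A \<in> carrier_mat d d" and h: "ipd d u (A *\<^sub>v u) = 1"
  shows "Re (ipd d u u) > 0"
proof -
  have "u \<noteq> 0\<^sub>v d"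
  proof
    assume "u = 0\<^sub>v d"
    hence "ipd d u (A *\<^sub>v u) = 0" by (simp add: ipd_def)
    thus False using h by simp
  qed
  hence "ipd d u u \<noteq> 0" using ipd_self_zero[OF u] by auto
  hence "Re (ipd d u u) \<noteq> 0" using ipd_self_Re(2)[of d u] by (simp add: complex_eq_iff)
  thus ?thesis using ipd_self_nonneg[of d u] by simp
qed

theorem theorem1:
  fixes d n :: nat and \<eta> :: "nat \<Rightarrow> real" and \<rho> :: "nat \<Rightarrow> complex mat" and lam :: real
  assumes "ensemble d n \<eta> \<rho>"
    and "lam \<noteq> 0" and "eigenvalue (rho0 d n \<eta> \<rho>) (complex_of_real lam)"
    and "\<forall>\<mu>::complex. \<mu> \<noteq> 0 \<and> eigenvalue (rho0 d n \<eta> \<rho>) \<mu> \<longrightarrow> lam \<le> Re \<mu>"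
  shows "pG d n \<eta> \<rho> \<ge> lam / real n"
proof -
  define R where "R = rho0 d n \<eta> \<rho>"
  have ens: "\<forall>i\<in>{1..n}. \<eta> i > 0 \<and> density_op d (\<rho> i)" and s\<eta>: "(\<Sum>i=1..n. \<eta> i) = 1"
    using assms(1) unfolding ensemble_def by blast+
  have eta: "\<forall>i\<in>{1..n}. \<eta> i > 0" using ens by blast
  have ps: "\<forall>i\<in>{1..n}. psd_op d (\<rho> i)" using ens unfolding density_op_def by blast
  have trr: "\<forall>i\<in>{1..n}. trace_op (\<rho> i) = 1" using ens unfolding density_op_def by blast
  have rc: "\<forall>i\<in>{1..n}. \<rho> i \<in> carrier_mat d d" using ps psd_carrier by blast
  have Rc: "R \<in> carrier_mat d d" unfolding R_def by (rule rho0_carrier)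
  have RP: "psd_op d R" unfolding R_def by (rule rho0_psd[OF ps eta])
  have RH: "hermitian_op d R" using RP by (rule psd_hermitian)
  have trR: "trace_op R = 1" unfolding R_def by (rule rho0_trace[OF rc trr s\<eta>])
  have n1: "n \<ge> 1"
  proof (rule ccontr)
    assume "\<not> n \<ge> 1"
    hence "n = 0" by simp
    thus False using s\<eta> by simp
  qed
  obtain x where x: "x \<in> carrier_vec d" "x \<noteq> 0\<^sub>v d" "R *\<^sub>v x = complex_of_real lam \<cdot>\<^sub>v x"
    using assms(3) Rc unfolding eigenvalue_def eigenvector_def R_def[symmetric] by auto
  have d0: "d > 0"
  proof (rule ccontr)
    assume "\<not> d > 0"
    hence "d = 0" by simp
    hence "x = 0\<^sub>v d" using x(1) by (intro eq_vecI) auto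
    thus False using x(2) by simp
  qed
  have lam: "lam > 0"
  proof -
    have "ipd d x (R *\<^sub>v x) = complex_of_real lam * ipd d x x" using x by (simp add: ipd_smult_right)
    hence "Re (ipd d x (R *\<^sub>v x)) = lam * Re (ipd d x x)" using ipd_self_Re(2)[of d x] by simp
    moreover have "Re (ipd d x (R *\<^sub>v x)) \<ge> 0" using psd_qf[OF RP x(1)] by simp
    moreover have "Re (ipd d x x) > 0"
    proof -
      have "ipd d x x \<noteq> 0" using ipd_self_zero[OF x(1)] x(2) by auto
      hence "Re (ipd d x x) \<noteq> 0" using ipd_self_Re(2)[of d x] by (simp add: complex_eq_iff)
      thus ?thesis using ipd_self_nonneg[of d x] by simp
    qed
    ultimately have "lam \<ge> 0" by (simp add: zero_le_mult_iff)
    thus ?thesis using assms(2) by simp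
  qed
  obtain b \<mu> where ob: "orthonormal d d b" and ev: "\<forall>j<d. R *\<^sub>v b j = complex_of_real (\<mu> j) \<cdot>\<^sub>v b j"
    using spectral[OF RH] by auto
  have bc: "\<And>j. j < d \<Longrightarrow> b j \<in> carrier_vec d" and bn: "\<And>j. j < d \<Longrightarrow> ipd d (b j) (b j) = 1"
    using ob unfolding orthonormal_def by auto
  have mu: "\<forall>j<d. \<mu> j \<ge> 0" using eig_nonneg[OF RP ob ev] by blast
  have mulam: "\<forall>j<d. \<mu> j \<noteq> 0 \<longrightarrow> lam \<le> \<mu> j"
  proof (intro allI impI)
    fix j assume j: "j < d" and m0: "\<mu> j \<noteq> 0"
    have "b j \<noteq> 0\<^sub>v d"
    proof
      assume "b j = 0\<^sub>v d"
      hence "ipd d (b j) (b j) = 0" by (simp add: ipd_def)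
      thus False using bn[OF j] by simp
    qed
    hence "eigenvector R (b j) (complex_of_real (\<mu> j))"
      unfolding eigenvector_def using bc[OF j] ev j Rc by auto
    hence "eigenvalue (rho0 d n \<eta> \<rho>) (complex_of_real (\<mu> j))" unfolding eigenvalue_def R_def by blast
    with assms(4) m0 have "lam \<le> Re (complex_of_real (\<mu> j))" by auto
    thus "lam \<le> \<mu> j" by simp
  qed
  have ker: "\<rho> i *\<^sub>v b j = 0\<^sub>v d" if i: "i \<in> {1..n}" and j: "j < d" and m0: "\<mu> j = 0" for i j
  proof -
    have "ipd d (b j) (R *\<^sub>v b j) = 0" using ev j m0 bc[OF j] by (simp add: ipd_smult_right)
    hence z: "(\<Sum>k=1..n. complex_of_real (\<eta> k) * ipd d (b j) (\<rho> k *\<^sub>v b j)) = 0"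
      using rho0_qf[OF rc bc[OF j]] unfolding R_def by simp
    have nn: "\<forall>k\<in>{1..n}. \<eta> k * Re (ipd d (b j) (\<rho> k *\<^sub>v b j)) \<ge> 0"
      using eta ps psd_qf[OF _ bc[OF j]] by (auto intro!: mult_nonneg_nonneg simp: less_imp_le)
    have "(\<Sum>k=1..n. \<eta> k * Re (ipd d (b j) (\<rho> k *\<^sub>v b j))) = 0"
      using arg_cong[OF z, of Re] by (simp add: Re_sum)
    hence "\<forall>k\<in>{1..n}. \<eta> k * Re (ipd d (b j) (\<rho> k *\<^sub>v b j)) = 0"
      using nn by (subst (asm) sum_nonneg_eq_0_iff) auto
    hence "\<eta> i * Re (ipd d (b j) (\<rho> i *\<^sub>v b j)) = 0" using i by blast
    moreover have "\<eta> i > 0" using i eta by blast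
    ultimately have "Re (ipd d (b j) (\<rho> i *\<^sub>v b j)) = 0" by simp
    moreover have "Im (ipd d (b j) (\<rho> i *\<^sub>v b j)) = 0" using psd_qf[OF _ bc[OF j]] ps i by auto
    ultimately have "ipd d (b j) (\<rho> i *\<^sub>v b j) = 0" by (simp add: complex_eq_iff)
    thus ?thesis using psd_kernel[OF _ bc[OF j]] ps i by auto
  qed
  have "\<forall>i\<in>{1..n}. \<exists>u \<kappa>. u \<in> carrier_vec d \<and> \<kappa> \<ge> \<eta> i \<and>
     (\<forall>v\<in>carrier_vec d. \<eta> i * Re (ipd d v (\<rho> i *\<^sub>v v)) \<le> \<kappa> * Re (ipd d v (R *\<^sub>v v))) \<and>
     ipd d u (R *\<^sub>v u) = 1 \<and> complex_of_real (\<eta> i) * ipd d u (\<rho> i *\<^sub>v u) = complex_of_real \<kappa> \<and>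
     Re (ipd d u u) \<le> 1 / lam"
  proof
    fix i assume i: "i \<in> {1..n}"
    show "\<exists>u \<kappa>. u \<in> carrier_vec d \<and> \<kappa> \<ge> \<eta> i \<and>
     (\<forall>v\<in>carrier_vec d. \<eta> i * Re (ipd d v (\<rho> i *\<^sub>v v)) \<le> \<kappa> * Re (ipd d v (R *\<^sub>v v))) \<and>
     ipd d u (R *\<^sub>v u) = 1 \<and> complex_of_real (\<eta> i) * ipd d u (\<rho> i *\<^sub>v u) = complex_of_real \<kappa> \<and>
     Re (ipd d u u) \<le> 1 / lam"
      by (rule key[OF RH _ _ ob ev mu lam mulam _ _ _ d0]) (use i ps eta ker trR trr in auto)
  qed
  then obtain U where "\<forall>i\<in>{1..n}. \<exists>\<kappa>. U i \<in> carrier_vec d \<and> \<kappa> \<ge> \<eta> i \<and>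
     (\<forall>v\<in>carrier_vec d. \<eta> i * Re (ipd d v (\<rho> i *\<^sub>v v)) \<le> \<kappa> * Re (ipd d v (R *\<^sub>v v))) \<and>
     ipd d (U i) (R *\<^sub>v U i) = 1 \<and> complex_of_real (\<eta> i) * ipd d (U i) (\<rho> i *\<^sub>v U i) = complex_of_real \<kappa> \<and>
     Re (ipd d (U i) (U i)) \<le> 1 / lam"
    by (rule bchoice[THEN exE]) blast
  then obtain Kp where UK: "\<forall>i\<in>{1..n}. U i \<in> carrier_vec d \<and> Kp i \<ge> \<eta> i \<and>
     (\<forall>v\<in>carrier_vec d. \<eta> i * Re (ipd d v (\<rho> i *\<^sub>v v)) \<le> Kp i * Re (ipd d v (R *\<^sub>v v))) \<and>
     ipd d (U i) (R *\<^sub>v U i) = 1 \<and> complex_of_real (\<eta> i) * ipd d (U i) (\<rho> i *\<^sub>v U i) = complex_of_real (Kp i) \<and>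
     Re (ipd d (U i) (U i)) \<le> 1 / lam"
    by (rule bchoice[THEN exE]) blast
  have Uc: "\<And>i. i \<in> {1..n} \<Longrightarrow> U i \<in> carrier_vec d" using UK by blast
  have conf: "\<And>i. i \<in> {1..n} \<Longrightarrow> conf d n \<eta> \<rho> i = Kp i"
  proof -
    fix i assume i: "i \<in> {1..n}"
    show "conf d n \<eta> \<rho> i = Kp i"
      by (rule conf_eq[OF i]) (use i ps UK in \<open>auto simp: R_def\<close>)
  qed
  define q where "q j = Re (ipd d (U j) (U j))" for j
  have qp: "\<And>i. i \<in> {1..n} \<Longrightarrow> q i > 0"
    unfolding q_def using UK qf_one_pos[OF _ Rc] by blast
  have qlam: "\<And>i. i \<in> {1..n} \<Longrightarrow> q i \<le> 1 / lam" unfolding q_def using UK by blast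
  define t where "t j = 1 / (real n * q j)" for j
  define Mm where "Mm = (\<lambda>j. r1 d (complex_of_real (t j)) (U j))"
  have tnn: "\<forall>j\<in>{1..n}. t j \<ge> 0"
  proof
    fix j assume j: "j \<in> {1..n}"
    have "q j > 0" using qp[OF j] .
    thus "t j \<ge> 0" unfolding t_def by simp
  qed
  have meas: "measurement d n (Mq_of d n Mm) Mm"
    unfolding Mm_def
  proof (rule meas_construct)
    show "\<forall>j\<in>{1..n}. U j \<in> carrier_vec d" using Uc by blast
    show "\<forall>j\<in>{1..n}. 0 \<le> t j" by (rule tnn)
    have "(\<Sum>j=1..n. t j * Re (ipd d (U j) (U j))) = (\<Sum>j=1..n. 1 / real n)"
      unfolding q_def[symmetric]
    proof (rule sum.cong[OF refl])
      fix j assume j: "j \<in> {1..n}"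
      have "q j > 0" using qp[OF j] .
      thus "t j * q j = 1 / real n" unfolding t_def by simp
    qed
    also have "\<dots> = 1" using n1 by simp
    finally show "(\<Sum>j=1..n. t j * Re (ipd d (U j) (U j))) \<le> 1" by simp
  qed
  have MC: "MC_measurement d n \<eta> \<rho> (Mq_of d n Mm) Mm"
    unfolding MC_measurement_def
  proof (intro conjI ballI meas)
    fix i assume i: "i \<in> {1..n}"
    have Pc: "\<rho> i \<in> carrier_mat d d" using rc i by blast
    define A where "A = complex_of_real (conf d n \<eta> \<rho> i) \<cdot>\<^sub>m R - complex_of_real (\<eta> i) \<cdot>\<^sub>m \<rho> i"
    have Ac: "A \<in> carrier_mat d d" unfolding A_def using Pc by (intro minus_carrier_mat smult_carrier_mat)
    have "trace_op (A * Mm i) = complex_of_real (t i) * ipd d (U i) (A *\<^sub>v U i)"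
      unfolding Mm_def by (rule trace_r1[OF Ac Uc[OF i]])
    also have "ipd d (U i) (A *\<^sub>v U i) = complex_of_real (conf d n \<eta> \<rho> i) * ipd d (U i) (R *\<^sub>v U i)
        - complex_of_real (\<eta> i) * ipd d (U i) (\<rho> i *\<^sub>v U i)"
      unfolding A_def by (rule qf_lincomb[OF Rc Pc Uc[OF i]])
    also have "\<dots> = 0" using UK i conf[OF i] by simp
    finally have "trace_op (A * Mm i) = 0" by simp
    moreover have "psd_op d (Mm i)" unfolding Mm_def using tnn i psd_r1 by auto
    ultimately show "Mm i \<in> MC_set d n \<eta> \<rho> i" unfolding MC_set_def A_def R_def by simp
  qed
  define val where "val = (\<Sum>i=1..n. \<eta> i * tr_re (\<rho> i) (Mm i))"
  have val_eq: "\<eta> i * tr_re (\<rho> i) (Mm i) = t i * Kp i" if i: "i \<in> {1..n}" for i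
  proof -
    have Pc: "\<rho> i \<in> carrier_mat d d" using rc i by blast
    have "\<eta> i * tr_re (\<rho> i) (Mm i) = t i * Re (complex_of_real (\<eta> i) * ipd d (U i) (\<rho> i *\<^sub>v U i))"
      unfolding tr_re_def Mm_def trace_r1[OF Pc Uc[OF i]] by simp
    also have "\<dots> = t i * Kp i" using UK i by simp
    finally show ?thesis .
  qed
  have val_ge: "val \<ge> lam / real n"
  proof -
    have "(\<Sum>i=1..n. lam / real n * \<eta> i) = lam / real n * (\<Sum>i=1..n. \<eta> i)"
      by (rule sum_distrib_left[symmetric])
    hence "lam / real n = (\<Sum>i=1..n. lam / real n * \<eta> i)" using s\<eta> by simp
    also have "\<dots> \<le> (\<Sum>i=1..n. t i * Kp i)"
    proof (rule sum_mono)
      fix i assume i: "i \<in> {1..n}"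
      have "lam \<le> 1 / q i" using qlam[OF i] qp[OF i] lam by (simp add: field_simps)
      hence tl: "lam / real n \<le> t i" unfolding t_def using n1 by (simp add: divide_right_mono field_simps)
      have ek: "\<eta> i \<le> Kp i" using UK i by blast
      have ep: "\<eta> i > 0" using eta i by blast
      have "lam / real n * \<eta> i \<le> lam / real n * Kp i" using ek lam n1 by (intro mult_left_mono) auto
      also have "\<dots> \<le> t i * Kp i" using tl ek ep by (intro mult_right_mono) auto
      finally show "lam / real n * \<eta> i \<le> t i * Kp i" .
    qed
    also have "\<dots> = val" unfolding val_def using val_eq by simp
    finally show ?thesis .
  qed
  define T where "T = {(\<Sum>i=1..n. \<eta> i * tr_re (\<rho> i) (M i)) | Mq M. MC_measurement d n \<eta> \<rho> Mq M}"
  have memT: "val \<in> T" unfolding T_def val_def using MC by blast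
  have bddT: "bdd_above T"
  proof (rule bdd_aboveI)
    fix y assume "y \<in> T"
    then obtain Mq M where y: "y = (\<Sum>i=1..n. \<eta> i * tr_re (\<rho> i) (M i))" and m: "MC_measurement d n \<eta> \<rho> Mq M"
      unfolding T_def by blast
    have m': "measurement d n Mq M" using m unfolding MC_measurement_def by blast
    have "y \<le> (\<Sum>i=1..n. \<eta> i * 1)" unfolding y
    proof (rule sum_mono)
      fix i assume i: "i \<in> {1..n}"
      have "tr_re (\<rho> i) (M i) \<le> 1" using meas_trace_le[OF m' _ _ i] ps trr i by auto
      moreover have "\<eta> i > 0" using eta i by blast
      ultimately show "\<eta> i * tr_re (\<rho> i) (M i) \<le> \<eta> i * 1" by (intro mult_left_mono) auto
    qed
    thus "y \<le> 1" using s\<eta> by simp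
  qed
  have "val \<le> pG d n \<eta> \<rho>" unfolding pG_def T_def[symmetric] by (rule cSup_upper[OF memT bddT])
  thus ?thesis using val_ge by simp
qed

end
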